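(* Let $(\Delta,R)$ be a gentle quiver with $f_{(\Delta,R)}=m\cdot[0,3]+[p+m+2,\,p]$ for some $m,p\in\mathbb N$, and let $\mathcal O_1,\dots,\mathcal O_{m'}$ be the pairwise different triangles in $(\Delta,R)$ (i.e. all of them). If $\alpha_i\in\mathcal O_i$ for each $i$ and $(\Delta',R'):=(\Delta,R)\setminus\{\alpha_i\mid i\in[1,m']\}$, then $(\Delta',R')$ is a gentle quiver of tree type, i.e. $|\Delta'_0|=|\Delta'_1|+1$.
   Context: A quiver $\Delta$ has finite vertex set $\Delta_0$, arrow set $\Delta_1$, maps $s,t$. A path of length $n\ge1$ is $(\alpha_1,\dots,\alpha_n)$ with $s\alpha_i=t\alpha_{i+1}$. A gentle quiver is $(\Delta,R)$ with $\Delta$ connected, $R$ a set of paths of length 2, such that: (1) each vertex is start of at most two arrows and end of at most two arrows; (2) for each arrow $\alpha$ at most one $\beta$ with $s\beta=t\alpha$, $(\beta,\alpha)\notin R$ and at most one $\gamma$ with $t\gamma=s\alpha$, $(\alpha,\gamma)\notin R$; (3) for each $\alpha$ at most one $\beta$ with $(\beta,\alpha)\in R$ and at most one $\gamma$ with $(\alpha,\gamma)\in R$; (4) for some $n$ every path of length $n$ has a subpath in $R$. Invariant: fix $\sigma,\tau:\Delta_1\to\{\pm1\}$ with distinct arrows of same start having opposite $\sigma$, distinct arrows of same end opposite $\tau$, and for $s\alpha=t\beta$: $(\alpha,\beta)\in R$ iff $\sigma\alpha=\tau\beta$; $\sigma\omega=\sigma\alpha_n,\tau\omega=\tau\alpha_1$.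 Permitted paths: no consecutive pair in $R$, plus trivial $1_{x,\varepsilon}$ ($s=t=x$, $\sigma=\varepsilon,\tau=-\varepsilon$); maximal if no arrow $\alpha$ with $s\alpha=t\omega,\sigma\alpha=-\tau\omega$ and no $\beta$ with $t\beta=s\omega,\tau\beta=-\sigma\omega$; set $\mathcal M$. Antipaths: all consecutive pairs in $R$, plus trivial $1'_{x,\varepsilon}$ ($\sigma=\tau=\varepsilon$); maximal if no $\alpha$ with $s\alpha=t\omega,\sigma\alpha=\tau\omega$ and no $\beta$ with $t\beta=s\omega,\tau\beta=\sigma\omega$; set $\mathcal N$. $\phi:\mathcal M\to\mathcal N$, $\omega\mapsto$ unique $\omega'$ with $t\omega'=t\omega,\tau\omega'=-\tau\omega$; $\psi:\mathcal N\to\mathcal M$, $\omega\mapsto$ unique $\omega'$ with $s\omega'=s\omega,\sigma\omega'=-\sigma\omega$; $\Phi=\phi\psi$; $\Phi$-orbit: $p=|\mathcal O|$, $q=$ total length. $\mathcal C$: arrows $\alpha$ with $(\alpha)$ not a subpath of a maximal antipath; $\Psi(\alpha)=$ unique $\beta\in\mathcal C$ with $t\beta=s\alpha,\tau\beta=\sigma\alpha$; $\Psi$-orbit: $p=0$, $q=|\mathcal O|$. $f(p,q)=$ number of orbits with these values; $[p,q]$ the characteristic function of $\{(p,q)\}$. A triangle is a $\Psi$-orbit with exactly 3 elements. For $\Delta_1'\subset\Delta_1$, $(\Delta,R)\setminus\Delta_1'$ has the same vertices, arrows $\Delta_1\setminus\Delta_1'$, and relations those $\rho\in R$ containing no arrow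 of $\Delta_1'$. *)

theory Defs
  imports Main
begin

text \<open>A quiver with relations: vertex set, arrow set, source/target maps, and a set
  of relations R of paths of length 2.  A path (alpha_1,...,alpha_n) is represented as the
  list [alpha_1,...,alpha_n] with s alpha_i = t alpha_(i+1); a length-2 path (beta,alpha)
  is the pair (beta,alpha) with s beta = t alpha.\<close>

record ('v,'a) quiver =
  verts :: "'v set"
  arrs  :: "'a set"
  src   :: "'a \<Rightarrow> 'v"
  tgt   :: "'a \<Rightarrow> 'v"
  rels  :: "('a \<times> 'a) set"

definition is_qpath :: "('v,'a) quiver \<Rightarrow> 'a list \<Rightarrow> bool" where
  "is_qpath Q w \<longleftrightarrow> w \<noteq> [] \<and> set w \<subseteq> arrs Q \<and>
     (\<forall>i. Suc i < length w \<longrightarrow> src Q (w!i) = tgt Q (w!Suc i))"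

definition qconnected :: "('v,'a) quiver \<Rightarrow> bool" where
  "qconnected Q \<longleftrightarrow> verts Q \<noteq> {} \<and>
     (\<forall>x\<in>verts Q. \<forall>y\<in>verts Q.
        (x,y) \<in> ({(src Q a, tgt Q a) | a. a \<in> arrs Q} \<union> {(tgt Q a, src Q a) | a. a \<in> arrs Q})\<^sup>*)"

definition gentle :: "('v,'a) quiver \<Rightarrow> bool" where
  "gentle Q \<longleftrightarrow>
     finite (verts Q) \<and> finite (arrs Q) \<and>
     (\<forall>a\<in>arrs Q. src Q a \<in> verts Q \<and> tgt Q a \<in> verts Q) \<and>
     (\<forall>(a,b)\<in>rels Q. a \<in> arrs Q \<and> b \<in> arrs Q \<and> src Q a = tgt Q b) \<and>
     qconnected Q \<and>
     (\<forall>x\<in>verts Q. card {a\<in>arrs Q. src Q a = x} \<le> 2 \<and> card {a\<in>arrs Q. tgt Q a = x} \<le> 2) \<and>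
     (\<forall>a\<in>arrs Q. card {b\<in>arrs Q. src Q b = tgt Q a \<and> (b,a) \<notin> rels Q} \<le> 1 \<and>
                 card {c\<in>arrs Q. tgt Q c = src Q a \<and> (a,c) \<notin> rels Q} \<le> 1) \<and>
     (\<forall>a\<in>arrs Q. card {b. (b,a) \<in> rels Q} \<le> 1 \<and> card {c. (a,c) \<in> rels Q} \<le> 1) \<and>
     (\<exists>n\<ge>1. \<forall>w. is_qpath Q w \<and> length w = n \<longrightarrow>
                 (\<exists>i. Suc i < n \<and> (w!i, w!Suc i) \<in> rels Q))"

definition qdel :: "('v,'a) quiver \<Rightarrow> 'a set \<Rightarrow> ('v,'a) quiver" where
  "qdel Q D = Q\<lparr>arrs := arrs Q - D,
                 rels := {r \<in> rels Q. fst r \<notin> D \<and> snd r \<notin> D}\<rparr>"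

definition admissible_signs :: "('v,'a) quiver \<Rightarrow> ('a \<Rightarrow> int) \<Rightarrow> ('a \<Rightarrow> int) \<Rightarrow> bool" where
  "admissible_signs Q \<sigma> \<tau> \<longleftrightarrow>
     (\<forall>a\<in>arrs Q. \<sigma> a \<in> {1,-1} \<and> \<tau> a \<in> {1,-1}) \<and>
     (\<forall>a\<in>arrs Q. \<forall>b\<in>arrs Q. a \<noteq> b \<and> src Q a = src Q b \<longrightarrow> \<sigma> a = - \<sigma> b) \<and>
     (\<forall>a\<in>arrs Q. \<forall>b\<in>arrs Q. a \<noteq> b \<and> tgt Q a = tgt Q b \<longrightarrow> \<tau> a = - \<tau> b) \<and>
     (\<forall>a\<in>arrs Q. \<forall>b\<in>arrs Q. src Q a = tgt Q b \<longrightarrow> ((a,b) \<in> rels Q \<longleftrightarrow> \<sigma> a = \<tau> b))"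

text \<open>Triv x e is the trivial (anti)path at x with parameter e; NPath w a path of length >= 1.\<close>
datatype ('v,'a) gpath = Triv 'v int | NPath "'a list"

fun gsrc :: "('v,'a) quiver \<Rightarrow> ('v,'a) gpath \<Rightarrow> 'v" where
  "gsrc Q (Triv x e) = x"
| "gsrc Q (NPath w) = src Q (last w)"

fun gtgt :: "('v,'a) quiver \<Rightarrow> ('v,'a) gpath \<Rightarrow> 'v" where
  "gtgt Q (Triv x e) = x"
| "gtgt Q (NPath w) = tgt Q (hd w)"

fun glen :: "('v,'a) gpath \<Rightarrow> nat" where
  "glen (Triv x e) = 0"
| "glen (NPath w) = length w"

fun psig :: "('a \<Rightarrow> int) \<Rightarrow> ('v,'a) gpath \<Rightarrow> int" where
  "psig \<sigma> (Triv x e) = e"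
| "psig \<sigma> (NPath w) = \<sigma> (last w)"

fun ptau :: "('a \<Rightarrow> int) \<Rightarrow> ('v,'a) gpath \<Rightarrow> int" where
  "ptau \<tau> (Triv x e) = - e"
| "ptau \<tau> (NPath w) = \<tau> (hd w)"

fun asig :: "('a \<Rightarrow> int) \<Rightarrow> ('v,'a) gpath \<Rightarrow> int" where
  "asig \<sigma> (Triv x e) = e"
| "asig \<sigma> (NPath w) = \<sigma> (last w)"

fun atau :: "('a \<Rightarrow> int) \<Rightarrow> ('v,'a) gpath \<Rightarrow> int" where
  "atau \<tau> (Triv x e) = e"
| "atau \<tau> (NPath w) = \<tau> (hd w)"

fun permitted :: "('v,'a) quiver \<Rightarrow> ('v,'a) gpath \<Rightarrow> bool" where
  "permitted Q (Triv x e) \<longleftrightarrow> x \<in> verts Q \<and> e \<in> {1,-1}"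
| "permitted Q (NPath w) \<longleftrightarrow> is_qpath Q w \<and>
     (\<forall>i. Suc i < length w \<longrightarrow> (w!i, w!Suc i) \<notin> rels Q)"

fun antipath :: "('v,'a) quiver \<Rightarrow> ('v,'a) gpath \<Rightarrow> bool" where
  "antipath Q (Triv x e) \<longleftrightarrow> x \<in> verts Q \<and> e \<in> {1,-1}"
| "antipath Q (NPath w) \<longleftrightarrow> is_qpath Q w \<and>
     (\<forall>i. Suc i < length w \<longrightarrow> (w!i, w!Suc i) \<in> rels Q)"

definition max_permitted :: "('v,'a) quiver \<Rightarrow> ('a \<Rightarrow> int) \<Rightarrow> ('a \<Rightarrow> int) \<Rightarrow> ('v,'a) gpath \<Rightarrow> bool" where
  "max_permitted Q \<sigma> \<tau> w \<longleftrightarrow> permitted Q w \<and>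
     \<not> (\<exists>a\<in>arrs Q. src Q a = gtgt Q w \<and> \<sigma> a = - ptau \<tau> w) \<and>
     \<not> (\<exists>b\<in>arrs Q. tgt Q b = gsrc Q w \<and> \<tau> b = - psig \<sigma> w)"

definition max_antipath :: "('v,'a) quiver \<Rightarrow> ('a \<Rightarrow> int) \<Rightarrow> ('a \<Rightarrow> int) \<Rightarrow> ('v,'a) gpath \<Rightarrow> bool" where
  "max_antipath Q \<sigma> \<tau> w \<longleftrightarrow> antipath Q w \<and>
     \<not> (\<exists>a\<in>arrs Q. src Q a = gtgt Q w \<and> \<sigma> a = atau \<tau> w) \<and>
     \<not> (\<exists>b\<in>arrs Q. tgt Q b = gsrc Q w \<and> \<tau> b = asig \<sigma> w)"

definition Mset :: "('v,'a) quiver \<Rightarrow> ('a \<Rightarrow> int) \<Rightarrow> ('a \<Rightarrow> int) \<Rightarrow> ('v,'a) gpath set" where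
  "Mset Q \<sigma> \<tau> = {w. max_permitted Q \<sigma> \<tau> w}"

definition Nset :: "('v,'a) quiver \<Rightarrow> ('a \<Rightarrow> int) \<Rightarrow> ('a \<Rightarrow> int) \<Rightarrow> ('v,'a) gpath set" where
  "Nset Q \<sigma> \<tau> = {w. max_antipath Q \<sigma> \<tau> w}"

definition phi_map :: "('v,'a) quiver \<Rightarrow> ('a \<Rightarrow> int) \<Rightarrow> ('a \<Rightarrow> int) \<Rightarrow> ('v,'a) gpath \<Rightarrow> ('v,'a) gpath" where
  "phi_map Q \<sigma> \<tau> w = (THE w'. w' \<in> Nset Q \<sigma> \<tau> \<and> gtgt Q w' = gtgt Q w \<and> atau \<tau> w' = - ptau \<tau> w)"

definition psi_map :: "('v,'a) quiver \<Rightarrow> ('a \<Rightarrow> int) \<Rightarrow> ('a \<Rightarrow> int) \<Rightarrow> ('v,'a) gpath \<Rightarrow> ('v,'a) gpath" where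
  "psi_map Q \<sigma> \<tau> w = (THE w'. w' \<in> Mset Q \<sigma> \<tau> \<and> gsrc Q w' = gsrc Q w \<and> psig \<sigma> w' = - asig \<sigma> w)"

definition Phi_map :: "('v,'a) quiver \<Rightarrow> ('a \<Rightarrow> int) \<Rightarrow> ('a \<Rightarrow> int) \<Rightarrow> ('v,'a) gpath \<Rightarrow> ('v,'a) gpath" where
  "Phi_map Q \<sigma> \<tau> = phi_map Q \<sigma> \<tau> \<circ> psi_map Q \<sigma> \<tau>"

definition Cset :: "('v,'a) quiver \<Rightarrow> ('a \<Rightarrow> int) \<Rightarrow> ('a \<Rightarrow> int) \<Rightarrow> 'a set" where
  "Cset Q \<sigma> \<tau> = {a \<in> arrs Q. \<not> (\<exists>w. NPath w \<in> Nset Q \<sigma> \<tau> \<and> a \<in> set w)}"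

definition Psi_map :: "('v,'a) quiver \<Rightarrow> ('a \<Rightarrow> int) \<Rightarrow> ('a \<Rightarrow> int) \<Rightarrow> 'a \<Rightarrow> 'a" where
  "Psi_map Q \<sigma> \<tau> a = (THE b. b \<in> Cset Q \<sigma> \<tau> \<and> tgt Q b = src Q a \<and> \<tau> b = \<sigma> a)"

definition orb :: "('b \<Rightarrow> 'b) \<Rightarrow> 'b \<Rightarrow> 'b set" where
  "orb g x = {(g ^^ n) x | n. True}"

definition Phi_orbits :: "('v,'a) quiver \<Rightarrow> ('a \<Rightarrow> int) \<Rightarrow> ('a \<Rightarrow> int) \<Rightarrow> ('v,'a) gpath set set" where
  "Phi_orbits Q \<sigma> \<tau> = orb (Phi_map Q \<sigma> \<tau>) ` Nset Q \<sigma> \<tau>"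

definition Psi_orbits :: "('v,'a) quiver \<Rightarrow> ('a \<Rightarrow> int) \<Rightarrow> ('a \<Rightarrow> int) \<Rightarrow> 'a set set" where
  "Psi_orbits Q \<sigma> \<tau> = orb (Psi_map Q \<sigma> \<tau>) ` Cset Q \<sigma> \<tau>"

definition finv :: "('v,'a) quiver \<Rightarrow> ('a \<Rightarrow> int) \<Rightarrow> ('a \<Rightarrow> int) \<Rightarrow> nat \<Rightarrow> nat \<Rightarrow> nat" where
  "finv Q \<sigma> \<tau> p q =
     card {X \<in> Phi_orbits Q \<sigma> \<tau>. card X = p \<and> (\<Sum>w\<in>X. glen w) = q}
   + card {X \<in> Psi_orbits Q \<sigma> \<tau>. p = 0 \<and> card X = q}"

definition triangles :: "('v,'a) quiver \<Rightarrow> ('a \<Rightarrow> int) \<Rightarrow> ('a \<Rightarrow> int) \<Rightarrow> 'a set set" where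
  "triangles Q \<sigma> \<tau> = {X \<in> Psi_orbits Q \<sigma> \<tau>. card X = 3}"

end

theory Submission
  imports Defs
begin

lemma chain_unique:
  assumes fn: "\<And>x y z. nx x y \<Longrightarrow> nx x z \<Longrightarrow> y = z"
  shows "successively nx l1 \<Longrightarrow> successively nx l2 \<Longrightarrow> l1 \<noteq> [] \<Longrightarrow> l2 \<noteq> [] \<Longrightarrow>
     hd l1 = hd l2 \<Longrightarrow> \<not>(\<exists>y. nx (last l1) y) \<Longrightarrow> \<not>(\<exists>y. nx (last l2) y) \<Longrightarrow> l1 = l2"
proof (induction l1 arbitrary: l2)
  case Nil then show ?case by simp
next
  case (Cons x xs)
  then obtain y ys where l2: "l2 = y # ys" by (cases l2) auto
  with Cons.prems have xy: "x = y" by simp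
  show ?case
  proof (cases "xs = []")
    case True
    then show ?thesis using Cons.prems l2 xy by (cases ys) auto
  next
    case False
    then obtain z zs where xs: "xs = z # zs" by (cases xs) auto
    have "ys \<noteq> []" using Cons.prems l2 xy xs by auto
    then obtain u us where ys: "ys = u # us" by (cases ys) auto
    have "nx x z" "nx y u" using Cons.prems l2 xs ys by auto
    then have "z = u" using fn xy by blast
    then have "xs = ys" using Cons.IH[of ys] Cons.prems l2 xs ys by auto
    then show ?thesis using l2 xy by simp
  qed
qed

lemma chain_ext:
  assumes bound: "\<And>l. successively nx l \<Longrightarrow> l \<noteq> [] \<Longrightarrow> hd l = x0 \<Longrightarrow> length l < K"
  shows "successively nx l \<Longrightarrow> l \<noteq> [] \<Longrightarrow> hd l = x0 \<Longrightarrow>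
     \<exists>l'. successively nx l' \<and> l' \<noteq> [] \<and> hd l' = x0 \<and> \<not>(\<exists>y. nx (last l') y)"
proof (induction "K - length l" arbitrary: l rule: less_induct)
  case less
  show ?case
  proof (cases "\<exists>y. nx (last l) y")
    case False then show ?thesis using less.prems by blast
  next
    case True
    then obtain y where y: "nx (last l) y" by blast
    have s: "successively nx (l @ [y])" using less.prems y
      by (auto simp: successively_append_iff)
    have "length (l @ [y]) < K" using bound[OF s] less.prems by simp
    then have "K - length (l @ [y]) < K - length l" by simp
    from less.hyps[OF this s] less.prems show ?thesis by simp
  qed
qed

lemma chain_hd_eq:
  assumes inj: "\<And>x y z. nx x z \<Longrightarrow> nx y z \<Longrightarrow> x = y"
  shows "successively nx l1 \<Longrightarrow> successively nx l2 \<Longrightarrow> \<not>(\<exists>z. nx z (hd l1)) \<Longrightarrow>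
     \<not>(\<exists>z. nx z (hd l2)) \<Longrightarrow> i < length l1 \<Longrightarrow> j < length l2 \<Longrightarrow> l1!i = l2!j \<Longrightarrow>
     i = j \<and> hd l1 = hd l2"
proof (induction i arbitrary: j)
  case 0
  show ?case
  proof (cases j)
    case 0 then show ?thesis using "0.prems" by (simp add: hd_conv_nth)
  next
    case (Suc j')
    have "nx (l2!j') (l2!j)" using "0.prems" Suc successively_nth by fastforce
    then have "nx (l2!j') (hd l1)" using "0.prems" by (simp add: hd_conv_nth)
    then show ?thesis using "0.prems" by blast
  qed
next
  case (Suc i')
  show ?case
  proof (cases j)
    case 0
    have "nx (l1!i') (l1!Suc i')" using Suc.prems successively_nth by fastforce
    then have "nx (l1!i') (hd l2)" using Suc.prems 0 by (simp add: hd_conv_nth)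
    then show ?thesis using Suc.prems by blast
  next
    case (Suc j')
    have a: "nx (l1!i') (l1!Suc i')" using Suc.prems successively_nth by fastforce
    have b: "nx (l2!j') (l2!Suc j')" using Suc.prems \<open>j = Suc j'\<close> successively_nth by fastforce
    have "l1!i' = l2!j'" using inj[OF a] b Suc.prems \<open>j = Suc j'\<close> by simp
    then have "i' = j' \<and> hd l1 = hd l2" using Suc.IH[of j'] Suc.prems \<open>j = Suc j'\<close> by simp
    then show ?thesis using \<open>j = Suc j'\<close> by simp
  qed
qed

lemma chain_distinct:
  assumes inj: "\<And>x y z. nx x z \<Longrightarrow> nx y z \<Longrightarrow> x = y"
    and "successively nx l" "\<not>(\<exists>z. nx z (hd l))"
  shows "distinct l"
  using chain_hd_eq[OF inj assms(2) assms(2) assms(3) assms(3)]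
  by (auto simp: distinct_conv_nth)


lemma chain_set:
  assumes "\<And>x y. nx x y \<Longrightarrow> y \<in> S"
  shows "successively nx l \<Longrightarrow> l \<noteq> [] \<Longrightarrow> hd l \<in> S \<Longrightarrow> set l \<subseteq> S"
proof (induction l)
  case Nil then show ?case by simp
next
  case (Cons x xs)
  then show ?case using assms by (cases xs) (auto simp: successively_Cons)
qed

section \<open>Orbits of injective self-maps of finite sets\<close>

lemma funpow_cancel:
  assumes inj: "inj_on g S" and gS: "g ` S \<subseteq> S" and x: "x \<in> S"
  shows "(g^^(i+d)) x = (g^^i) x \<Longrightarrow> (g^^d) x = x"
proof (induction i)
  case 0 then show ?case by simp
next
  case (Suc i)
  have mem: "\<And>k. (g^^k) x \<in> S"
  proof -
    fix k show "(g^^k) x \<in> S" by (induction k) (use x gS in auto)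
  qed
  have "g ((g^^(i+d)) x) = g ((g^^i) x)" using Suc.prems by simp
  then have "(g^^(i+d)) x = (g^^i) x" using inj mem by (auto simp: inj_on_def)
  then show ?case using Suc.IH by simp
qed

lemma funpow_mem:
  assumes gS: "g ` S \<subseteq> S" and x: "x \<in> S"
  shows "(g^^k) x \<in> S"
  by (induction k) (use x gS in auto)

lemma funpow_return:
  assumes fin: "finite S" and inj: "inj_on g S" and gS: "g ` S \<subseteq> S" and x: "x \<in> S"
  shows "\<exists>n>0. (g^^n) x = x"
proof -
  have "\<not> inj_on (\<lambda>k. (g^^k) x) {..card S}"
  proof
    assume "inj_on (\<lambda>k. (g^^k) x) {..card S}"
    moreover have "(\<lambda>k. (g^^k) x) ` {..card S} \<subseteq> S" using funpow_mem[OF gS x] by auto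
    ultimately have "card {..card S} \<le> card S" using card_inj_on_le fin by blast
    then show False by simp
  qed
  then obtain i j where ij: "i \<noteq> j" "(g^^i) x = (g^^j) x" by (auto simp: inj_on_def)
  then show ?thesis
  proof (cases "i < j")
    case True
    then have "(g^^(i + (j-i))) x = (g^^i) x" using ij by simp
    then have "(g^^(j-i)) x = x" using funpow_cancel[OF inj gS x] by blast
    then show ?thesis using True by (intro exI[of _ "j-i"]) auto
  next
    case False
    then have "(g^^(j + (i-j))) x = (g^^j) x" using ij by simp
    then have "(g^^(i-j)) x = x" using funpow_cancel[OF inj gS x] by blast
    then show ?thesis using False ij by (intro exI[of _ "i-j"]) auto
  qed
qed

lemma funpow_mult_fix: "(g^^n) x = x \<Longrightarrow> (g^^(n*k)) x = x"
proof (induction k)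
  case 0 then show ?case by simp
next
  case (Suc k)
  have "(g^^(n*Suc k)) x = (g^^n) ((g^^(n*k)) x)"
    by (simp add: funpow_add)
  then show ?case using Suc by simp
qed

lemma orb_self: "x \<in> orb g x"
  unfolding orb_def by (auto intro: exI[of _ 0])

lemma orb_sub:
  assumes gS: "g ` S \<subseteq> S" and x: "x \<in> S"
  shows "orb g x \<subseteq> S"
  unfolding orb_def using funpow_mem[OF gS x] by auto

lemma orb_trans: "y \<in> orb g x \<Longrightarrow> orb g y \<subseteq> orb g x"
proof
  fix z assume "y \<in> orb g x" "z \<in> orb g y"
  then obtain k l where "y = (g^^k) x" "z = (g^^l) y" unfolding orb_def by auto
  then have "z = (g^^(l+k)) x" by (simp add: funpow_add)
  then show "z \<in> orb g x" unfolding orb_def by auto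
qed

lemma orb_eq:
  assumes fin: "finite S" and inj: "inj_on g S" and gS: "g ` S \<subseteq> S" and x: "x \<in> S"
    and y: "y \<in> orb g x"
  shows "orb g y = orb g x"
proof
  show "orb g y \<subseteq> orb g x" using orb_trans[OF y] .
  obtain n where n: "n > 0" "(g^^n) x = x" using funpow_return[OF fin inj gS x] by blast
  obtain k where k: "y = (g^^k) x" using y unfolding orb_def by auto
  obtain n' where n': "n = Suc n'" using n(1) by (cases n) auto
  have eq: "n'*k + k = n*k" using n' by simp
  have "(g^^(n'*k)) y = (g^^(n'*k)) ((g^^k) x)" using k by simp
  also have "\<dots> = (g^^(n'*k + k)) x" by (simp only: funpow_add comp_apply)
  also have "\<dots> = (g^^(n*k)) x" by (simp only: eq)
  also have "\<dots> = x" using funpow_mult_fix[OF n(2)] .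
  finally have "x = (g^^(n'*k)) y" by (rule sym)
  then have "x \<in> orb g y" unfolding orb_def by blast
  then show "orb g x \<subseteq> orb g y" by (rule orb_trans)
qed

lemma orbs_disjoint:
  assumes fin: "finite S" and inj: "inj_on g S" and gS: "g ` S \<subseteq> S"
    and X: "X \<in> orb g ` S" and Y: "Y \<in> orb g ` S" and ne: "X \<noteq> Y"
  shows "X \<inter> Y = {}"
proof (rule ccontr)
  assume "X \<inter> Y \<noteq> {}"
  then obtain z where z: "z \<in> X" "z \<in> Y" by auto
  obtain x y where xy: "x \<in> S" "y \<in> S" "X = orb g x" "Y = orb g y" using X Y by auto
  have "orb g z = X" using orb_eq[OF fin inj gS xy(1)] z(1) xy(3) by simp
  moreover have "orb g z = Y" using orb_eq[OF fin inj gS xy(2)] z(2) xy(4) by simp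
  ultimately show False using ne by simp
qed

lemma orbs_union:
  assumes gS: "g ` S \<subseteq> S"
  shows "\<Union> (orb g ` S) = S"
proof
  show "\<Union> (orb g ` S) \<subseteq> S" using orb_sub[OF gS] by (simp add: UN_least)
  show "S \<subseteq> \<Union> (orb g ` S)" using orb_self by fast
qed


locale gq =
  fixes Q :: "('v,'a) quiver" and \<sigma> \<tau> :: "'a \<Rightarrow> int"
  assumes gen: "gentle Q" and adm: "admissible_signs Q \<sigma> \<tau>"
begin

lemma finA: "finite (arrs Q)" and finV: "finite (verts Q)"
  using gen unfolding gentle_def by simp_all

lemma srcV: "a \<in> arrs Q \<Longrightarrow> src Q a \<in> verts Q"
  and tgtV: "a \<in> arrs Q \<Longrightarrow> tgt Q a \<in> verts Q"
  using gen unfolding gentle_def by simp_all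

lemma relA: "(a,b) \<in> rels Q \<Longrightarrow> a \<in> arrs Q \<and> b \<in> arrs Q \<and> src Q a = tgt Q b"
proof -
  assume h: "(a,b) \<in> rels Q"
  have "\<forall>(a,b)\<in>rels Q. a \<in> arrs Q \<and> b \<in> arrs Q \<and> src Q a = tgt Q b"
    using gen unfolding gentle_def by simp
  then show ?thesis using h by fast
qed

lemma adm1: "\<forall>a\<in>arrs Q. \<sigma> a \<in> {1,-1} \<and> \<tau> a \<in> {1,-1}"
  and adm2: "\<forall>a\<in>arrs Q. \<forall>b\<in>arrs Q. a \<noteq> b \<and> src Q a = src Q b \<longrightarrow> \<sigma> a = - \<sigma> b"
  and adm3: "\<forall>a\<in>arrs Q. \<forall>b\<in>arrs Q. a \<noteq> b \<and> tgt Q a = tgt Q b \<longrightarrow> \<tau> a = - \<tau> b"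
  and adm4: "\<forall>a\<in>arrs Q. \<forall>b\<in>arrs Q. src Q a = tgt Q b \<longrightarrow> ((a,b) \<in> rels Q \<longleftrightarrow> \<sigma> a = \<tau> b)"
  using adm unfolding admissible_signs_def by simp_all

lemma sig: "a \<in> arrs Q \<Longrightarrow> \<sigma> a \<in> {1,-1}" and tau: "a \<in> arrs Q \<Longrightarrow> \<tau> a \<in> {1,-1}"
  using adm1 by simp_all

lemma src_inj: "a \<in> arrs Q \<Longrightarrow> b \<in> arrs Q \<Longrightarrow> src Q a = src Q b \<Longrightarrow> \<sigma> a = \<sigma> b \<Longrightarrow> a = b"
proof (rule ccontr)
  assume h: "a \<in> arrs Q" "b \<in> arrs Q" "src Q a = src Q b" "\<sigma> a = \<sigma> b" "a \<noteq> b"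
  then have "\<sigma> a = - \<sigma> b" using adm2 by blast
  moreover have "\<sigma> a \<in> {1,-1}" using sig h by simp
  ultimately show False using h by auto
qed

lemma tgt_inj: "a \<in> arrs Q \<Longrightarrow> b \<in> arrs Q \<Longrightarrow> tgt Q a = tgt Q b \<Longrightarrow> \<tau> a = \<tau> b \<Longrightarrow> a = b"
proof (rule ccontr)
  assume h: "a \<in> arrs Q" "b \<in> arrs Q" "tgt Q a = tgt Q b" "\<tau> a = \<tau> b" "a \<noteq> b"
  then have "\<tau> a = - \<tau> b" using adm3 by blast
  moreover have "\<tau> a \<in> {1,-1}" using tau h by simp
  ultimately show False using h by auto
qed

lemma R_iff: "a \<in> arrs Q \<Longrightarrow> b \<in> arrs Q \<Longrightarrow> src Q a = tgt Q b \<Longrightarrow> (a,b) \<in> rels Q \<longleftrightarrow> \<sigma> a = \<tau> b"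
  using adm4 by simp

lemma R_sign: "(a,b) \<in> rels Q \<Longrightarrow> \<sigma> a = \<tau> b"
proof -
  assume h: "(a,b) \<in> rels Q"
  then have "a \<in> arrs Q" "b \<in> arrs Q" "src Q a = tgt Q b" using relA by simp_all
  then show ?thesis using R_iff h by simp
qed

lemma R_pred_unique: "(b,a) \<in> rels Q \<Longrightarrow> (c,a) \<in> rels Q \<Longrightarrow> b = c"
proof -
  assume h: "(b,a) \<in> rels Q" "(c,a) \<in> rels Q"
  have "b \<in> arrs Q" "c \<in> arrs Q" "src Q b = src Q c" using relA[OF h(1)] relA[OF h(2)] by simp_all
  moreover have "\<sigma> b = \<sigma> c" using R_sign[OF h(1)] R_sign[OF h(2)] by simp
  ultimately show ?thesis using src_inj by simp
qed

lemma R_succ_unique: "(a,b) \<in> rels Q \<Longrightarrow> (a,c) \<in> rels Q \<Longrightarrow> b = c"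
proof -
  assume h: "(a,b) \<in> rels Q" "(a,c) \<in> rels Q"
  have "b \<in> arrs Q" "c \<in> arrs Q" "tgt Q b = tgt Q c" using relA[OF h(1)] relA[OF h(2)] by simp_all
  moreover have "\<tau> b = \<tau> c" using R_sign[OF h(1)] R_sign[OF h(2)] by simp
  ultimately show ?thesis using tgt_inj by simp
qed

lemma pm_neq: "x \<in> {1,-1::int} \<Longrightarrow> y \<in> {1,-1} \<Longrightarrow> x \<noteq> y \<longleftrightarrow> x = - y"
  by auto

definition pp :: "'a \<Rightarrow> 'a \<Rightarrow> bool" where
  "pp a b \<longleftrightarrow> a \<in> arrs Q \<and> b \<in> arrs Q \<and> src Q a = tgt Q b \<and> (a,b) \<notin> rels Q"

definition ap :: "'a \<Rightarrow> 'a \<Rightarrow> bool" where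
  "ap a b \<longleftrightarrow> (a,b) \<in> rels Q"

lemma pp_succ_unique: "pp a b \<Longrightarrow> pp a c \<Longrightarrow> b = c"
proof -
  assume h: "pp a b" "pp a c"
  then have "\<tau> b \<noteq> \<sigma> a" "\<tau> c \<noteq> \<sigma> a" using R_iff unfolding pp_def by auto
  moreover have "\<sigma> a \<in> {1,-1}" "\<tau> b \<in> {1,-1}" "\<tau> c \<in> {1,-1}"
    using sig tau h unfolding pp_def by auto
  ultimately have "\<tau> b = \<tau> c" by auto
  then show "b = c" using tgt_inj h unfolding pp_def by auto
qed

lemma pp_pred_unique: "pp b a \<Longrightarrow> pp c a \<Longrightarrow> b = c"
proof -
  assume h: "pp b a" "pp c a"
  then have "\<sigma> b \<noteq> \<tau> a" "\<sigma> c \<noteq> \<tau> a" using R_iff unfolding pp_def by auto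
  moreover have "\<tau> a \<in> {1,-1}" "\<sigma> b \<in> {1,-1}" "\<sigma> c \<in> {1,-1}"
    using sig tau h unfolding pp_def by auto
  ultimately have "\<sigma> b = \<sigma> c" by auto
  then show "b = c" using src_inj h unfolding pp_def by auto
qed

lemma set_sub_nth: "set w \<subseteq> S \<longleftrightarrow> (\<forall>i<length w. w!i \<in> S)"
  unfolding set_conv_nth by blast

lemma permitted_NPath: "permitted Q (NPath w) \<longleftrightarrow> w \<noteq> [] \<and> set w \<subseteq> arrs Q \<and> successively pp w"
proof
  assume h: "permitted Q (NPath w)"
  have h1: "w \<noteq> []" "set w \<subseteq> arrs Q"
    and h2: "\<forall>i. Suc i < length w \<longrightarrow> src Q (w!i) = tgt Q (w!Suc i)"
    and h3: "\<forall>i. Suc i < length w \<longrightarrow> (w!i, w!Suc i) \<notin> rels Q"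
    using h by (simp_all add: is_qpath_def)
  have "pp (w!i) (w!Suc i)" if "Suc i < length w" for i
  proof -
    have "w!i \<in> arrs Q" "w!Suc i \<in> arrs Q" using h1(2) that
      by (meson Suc_lessD nth_mem subsetD)+
    then show ?thesis unfolding pp_def using h2 h3 that by simp
  qed
  then have "successively pp w" unfolding successively_conv_nth by simp
  then show "w \<noteq> [] \<and> set w \<subseteq> arrs Q \<and> successively pp w" using h1 by simp
next
  assume h: "w \<noteq> [] \<and> set w \<subseteq> arrs Q \<and> successively pp w"
  then have "\<forall>i. Suc i < length w \<longrightarrow> pp (w!i) (w!Suc i)"
    by (simp add: successively_conv_nth)
  then show "permitted Q (NPath w)" using h by (simp add: is_qpath_def pp_def)
qed

lemma antipath_NPath: "antipath Q (NPath w) \<longleftrightarrow> w \<noteq> [] \<and> set w \<subseteq> arrs Q \<and> successively ap w"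
proof
  assume h: "antipath Q (NPath w)"
  then have "\<forall>i. Suc i < length w \<longrightarrow> ap (w!i) (w!Suc i)" by (simp add: ap_def)
  then have "successively ap w" unfolding successively_conv_nth by simp
  then show "w \<noteq> [] \<and> set w \<subseteq> arrs Q \<and> successively ap w" using h by (simp add: is_qpath_def)
next
  assume h: "w \<noteq> [] \<and> set w \<subseteq> arrs Q \<and> successively ap w"
  then have r: "\<forall>i. Suc i < length w \<longrightarrow> (w!i, w!Suc i) \<in> rels Q"
    by (simp add: successively_conv_nth ap_def)
  then have "\<forall>i. Suc i < length w \<longrightarrow> src Q (w!i) = tgt Q (w!Suc i)" using relA by simp
  then show "antipath Q (NPath w)" using h r by (simp add: is_qpath_def)
qed


abbreviation "NN \<equiv> Nset Q \<sigma> \<tau>"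
abbreviation "MM \<equiv> Mset Q \<sigma> \<tau>"

lemma N_mem: "w \<in> NN \<longleftrightarrow> antipath Q w \<and> \<not>(\<exists>a\<in>arrs Q. src Q a = gtgt Q w \<and> \<sigma> a = atau \<tau> w)
   \<and> \<not>(\<exists>b\<in>arrs Q. tgt Q b = gsrc Q w \<and> \<tau> b = asig \<sigma> w)"
  by (simp add: Nset_def max_antipath_def)

lemma M_mem: "w \<in> MM \<longleftrightarrow> permitted Q w \<and> \<not>(\<exists>a\<in>arrs Q. src Q a = gtgt Q w \<and> \<sigma> a = - ptau \<tau> w)
   \<and> \<not>(\<exists>b\<in>arrs Q. tgt Q b = gsrc Q w \<and> \<tau> b = - psig \<sigma> w)"
  by (simp add: Mset_def max_permitted_def)

lemma hd_last_A: "w \<noteq> [] \<Longrightarrow> set w \<subseteq> arrs Q \<Longrightarrow> hd w \<in> arrs Q \<and> last w \<in> arrs Q"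
  by auto

lemma N_hd: "NPath l \<in> NN \<Longrightarrow> \<not>(\<exists>y. ap y (hd l))"
proof
  assume h: "NPath l \<in> NN" and "\<exists>y. ap y (hd l)"
  then obtain y where y: "(y, hd l) \<in> rels Q" unfolding ap_def by blast
  have "y \<in> arrs Q" "src Q y = tgt Q (hd l)" using relA[OF y] by simp_all
  moreover have "\<sigma> y = \<tau> (hd l)" using R_sign[OF y] .
  ultimately show False using h unfolding N_mem by auto
qed

lemma N_last: "NPath l \<in> NN \<Longrightarrow> \<not>(\<exists>y. ap (last l) y)"
proof
  assume h: "NPath l \<in> NN" and "\<exists>y. ap (last l) y"
  then obtain y where y: "(last l, y) \<in> rels Q" unfolding ap_def by blast
  have "y \<in> arrs Q" "src Q (last l) = tgt Q y" using relA[OF y] by simp_all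
  moreover have "\<sigma> (last l) = \<tau> y" using R_sign[OF y] .
  ultimately show False using h unfolding N_mem by auto
qed

lemma neg_sign: "x \<in> {1,-1::int} \<Longrightarrow> y \<in> {1,-1} \<Longrightarrow> x \<noteq> y \<Longrightarrow> x = - y"
  by auto

lemma M_hd: "NPath l \<in> MM \<Longrightarrow> \<not>(\<exists>y. pp y (hd l))"
proof
  assume h: "NPath l \<in> MM" and "\<exists>y. pp y (hd l)"
  then obtain y where y: "pp y (hd l)" by blast
  then have yy: "y \<in> arrs Q" "hd l \<in> arrs Q" "src Q y = tgt Q (hd l)" "(y, hd l) \<notin> rels Q"
    unfolding pp_def by simp_all
  then have "\<sigma> y \<noteq> \<tau> (hd l)" using R_iff by simp
  then have "\<sigma> y = - \<tau> (hd l)" using neg_sign sig tau yy by blast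
  then show False using h yy unfolding M_mem by auto
qed

lemma M_last: "NPath l \<in> MM \<Longrightarrow> \<not>(\<exists>y. pp (last l) y)"
proof
  assume h: "NPath l \<in> MM" and "\<exists>y. pp (last l) y"
  then obtain y where y: "pp (last l) y" by blast
  then have yy: "y \<in> arrs Q" "last l \<in> arrs Q" "src Q (last l) = tgt Q y" "(last l, y) \<notin> rels Q"
    unfolding pp_def by simp_all
  then have "\<tau> y \<noteq> \<sigma> (last l)" using R_iff by auto
  then have "\<tau> y = - \<sigma> (last l)" using neg_sign sig tau yy by blast
  then show False using h yy unfolding M_mem by auto
qed

lemma N_NPath: "NPath l \<in> NN \<Longrightarrow> l \<noteq> [] \<and> set l \<subseteq> arrs Q \<and> successively ap l"
  unfolding N_mem antipath_NPath by simp

lemma M_NPath: "NPath l \<in> MM \<Longrightarrow> l \<noteq> [] \<and> set l \<subseteq> arrs Q \<and> successively pp l"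
  unfolding M_mem permitted_NPath by simp

lemma ap_fn: "ap x y \<Longrightarrow> ap x z \<Longrightarrow> y = z"
  unfolding ap_def using R_succ_unique by blast

lemma ap_inj: "ap x z \<Longrightarrow> ap y z \<Longrightarrow> x = y"
  unfolding ap_def using R_pred_unique by blast

lemma apr_fn: "(\<lambda>x y. ap y x) x y \<Longrightarrow> (\<lambda>x y. ap y x) x z \<Longrightarrow> y = z"
  using ap_inj by simp

lemma apr_inj: "(\<lambda>x y. ap y x) x z \<Longrightarrow> (\<lambda>x y. ap y x) y z \<Longrightarrow> x = y"
  using ap_fn by simp

lemma pp_fn: "pp x y \<Longrightarrow> pp x z \<Longrightarrow> y = z"
  using pp_succ_unique by blast

lemma ppr_fn: "(\<lambda>x y. pp y x) x y \<Longrightarrow> (\<lambda>x y. pp y x) x z \<Longrightarrow> y = z"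
  using pp_pred_unique by simp

lemma N_triv_hd: "Triv x f \<in> NN \<Longrightarrow> NPath l \<in> NN \<Longrightarrow> tgt Q (hd l) = x \<Longrightarrow> \<tau> (hd l) = f \<Longrightarrow> False"
proof -
  assume h: "Triv x f \<in> NN" "NPath l \<in> NN" "tgt Q (hd l) = x" "\<tau> (hd l) = f"
  have "hd l \<in> arrs Q" using N_NPath[OF h(2)] hd_last_A by blast
  moreover have "\<not>(\<exists>b\<in>arrs Q. tgt Q b = x \<and> \<tau> b = f)" using h(1) unfolding N_mem by simp
  ultimately show False using h(3,4) by blast
qed

lemma N_triv_last: "Triv x f \<in> NN \<Longrightarrow> NPath l \<in> NN \<Longrightarrow> src Q (last l) = x \<Longrightarrow> \<sigma> (last l) = f \<Longrightarrow> False"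
proof -
  assume h: "Triv x f \<in> NN" "NPath l \<in> NN" "src Q (last l) = x" "\<sigma> (last l) = f"
  have "last l \<in> arrs Q" using N_NPath[OF h(2)] hd_last_A by blast
  moreover have "\<not>(\<exists>a\<in>arrs Q. src Q a = x \<and> \<sigma> a = f)" using h(1) unfolding N_mem by simp
  ultimately show False using h(3,4) by blast
qed

lemma M_triv_hd: "Triv x f \<in> MM \<Longrightarrow> NPath l \<in> MM \<Longrightarrow> tgt Q (hd l) = x \<Longrightarrow> \<tau> (hd l) = - f \<Longrightarrow> False"
proof -
  assume h: "Triv x f \<in> MM" "NPath l \<in> MM" "tgt Q (hd l) = x" "\<tau> (hd l) = - f"
  have "hd l \<in> arrs Q" using M_NPath[OF h(2)] hd_last_A by blast
  moreover have "\<not>(\<exists>b\<in>arrs Q. tgt Q b = x \<and> \<tau> b = - f)" using h(1) unfolding M_mem by simp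
  ultimately show False using h(3,4) by blast
qed

lemma M_triv_last: "Triv x f \<in> MM \<Longrightarrow> NPath l \<in> MM \<Longrightarrow> src Q (last l) = x \<Longrightarrow> \<sigma> (last l) = f \<Longrightarrow> False"
proof -
  assume h: "Triv x f \<in> MM" "NPath l \<in> MM" "src Q (last l) = x" "\<sigma> (last l) = f"
  have "last l \<in> arrs Q" using M_NPath[OF h(2)] hd_last_A by blast
  moreover have "\<not>(\<exists>a\<in>arrs Q. src Q a = x \<and> \<sigma> a = f)" using h(1) unfolding M_mem by simp
  ultimately show False using h(3,4) by blast
qed

lemma N_uniq_top:
  assumes w1: "w1 \<in> NN" and w2: "w2 \<in> NN" and t: "gtgt Q w1 = gtgt Q w2" and e: "atau \<tau> w1 = atau \<tau> w2"
  shows "w1 = w2"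
proof (cases w1)
  case (Triv x f)
  show ?thesis
  proof (cases w2)
    case (NPath l2)
    have a: "tgt Q (hd l2) = x" using t Triv NPath by simp
    have b: "\<tau> (hd l2) = f" using e Triv NPath by simp
    have "Triv x f \<in> NN" "NPath l2 \<in> NN" using w1 w2 Triv NPath by simp_all
    then show ?thesis using N_triv_hd a b by blast
  qed (use t e Triv in simp)
next
  case (NPath l1)
  note w1e = this
  show ?thesis
  proof (cases w2)
    case (Triv x f)
    have a: "tgt Q (hd l1) = x" using t Triv w1e by simp
    have b: "\<tau> (hd l1) = f" using e Triv w1e by simp
    have "Triv x f \<in> NN" "NPath l1 \<in> NN" using w1 w2 Triv w1e by simp_all
    then show ?thesis using N_triv_hd a b by blast
  next
    case (NPath l2)
    have c1: "l1 \<noteq> []" "set l1 \<subseteq> arrs Q" "successively ap l1" using N_NPath w1 w1e by simp_all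
    have c2: "l2 \<noteq> []" "set l2 \<subseteq> arrs Q" "successively ap l2" using N_NPath w2 NPath by simp_all
    have "hd l1 \<in> arrs Q" "hd l2 \<in> arrs Q" using c1 c2 hd_last_A by blast+
    moreover have "tgt Q (hd l1) = tgt Q (hd l2)" "\<tau> (hd l1) = \<tau> (hd l2)" using t e w1e NPath by simp_all
    ultimately have hh: "hd l1 = hd l2" using tgt_inj by blast
    have n1: "\<not>(\<exists>y. ap (last l1) y)" using N_last w1 w1e by simp
    have n2: "\<not>(\<exists>y. ap (last l2) y)" using N_last w2 NPath by simp
    have "l1 = l2" by (rule chain_unique[OF ap_fn c1(3) c2(3) c1(1) c2(1) hh n1 n2])
    then show ?thesis using NPath w1e by simp
  qed
qed

lemma N_uniq_bot:
  assumes w1: "w1 \<in> NN" and w2: "w2 \<in> NN" and t: "gsrc Q w1 = gsrc Q w2" and e: "asig \<sigma> w1 = asig \<sigma> w2"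
  shows "w1 = w2"
proof (cases w1)
  case (Triv x f)
  show ?thesis
  proof (cases w2)
    case (NPath l2)
    have a: "src Q (last l2) = x" using t Triv NPath by simp
    have b: "\<sigma> (last l2) = f" using e Triv NPath by simp
    have "Triv x f \<in> NN" "NPath l2 \<in> NN" using w1 w2 Triv NPath by simp_all
    then show ?thesis using N_triv_last a b by blast
  qed (use t e Triv in simp)
next
  case (NPath l1)
  note w1e = this
  show ?thesis
  proof (cases w2)
    case (Triv x f)
    have a: "src Q (last l1) = x" using t Triv w1e by simp
    have b: "\<sigma> (last l1) = f" using e Triv w1e by simp
    have "Triv x f \<in> NN" "NPath l1 \<in> NN" using w1 w2 Triv w1e by simp_all
    then show ?thesis using N_triv_last a b by blast
  next
    case (NPath l2)
    have c1: "l1 \<noteq> []" "set l1 \<subseteq> arrs Q" "successively ap l1" using N_NPath w1 w1e by simp_all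
    have c2: "l2 \<noteq> []" "set l2 \<subseteq> arrs Q" "successively ap l2" using N_NPath w2 NPath by simp_all
    have "last l1 \<in> arrs Q" "last l2 \<in> arrs Q" using c1 c2 hd_last_A by blast+
    moreover have "src Q (last l1) = src Q (last l2)" "\<sigma> (last l1) = \<sigma> (last l2)" using t e w1e NPath by simp_all
    ultimately have hh: "hd (rev l1) = hd (rev l2)" using src_inj by (simp add: hd_rev)
    have n1: "\<not>(\<exists>y. (\<lambda>x y. ap y x) (last (rev l1)) y)" using N_hd w1 w1e by (simp add: last_rev)
    have n2: "\<not>(\<exists>y. (\<lambda>x y. ap y x) (last (rev l2)) y)" using N_hd w2 NPath by (simp add: last_rev)
    have s1: "successively (\<lambda>x y. ap y x) (rev l1)" using c1 by simp
    have s2: "successively (\<lambda>x y. ap y x) (rev l2)" using c2 by simp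
    have "rev l1 = rev l2"
      by (rule chain_unique[OF apr_fn s1 s2 _ _ hh n1 n2]) (use c1 c2 in simp_all)
    then show ?thesis using NPath w1e by simp
  qed
qed

lemma M_uniq_top:
  assumes w1: "w1 \<in> MM" and w2: "w2 \<in> MM" and t: "gtgt Q w1 = gtgt Q w2" and e: "ptau \<tau> w1 = ptau \<tau> w2"
  shows "w1 = w2"
proof (cases w1)
  case (Triv x f)
  show ?thesis
  proof (cases w2)
    case (NPath l2)
    have a: "tgt Q (hd l2) = x" using t Triv NPath by simp
    have b: "\<tau> (hd l2) = - f" using e Triv NPath by simp
    have "Triv x f \<in> MM" "NPath l2 \<in> MM" using w1 w2 Triv NPath by simp_all
    then show ?thesis using M_triv_hd a b by blast
  qed (use t e Triv in simp)
next
  case (NPath l1)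
  note w1e = this
  show ?thesis
  proof (cases w2)
    case (Triv x f)
    have a: "tgt Q (hd l1) = x" using t Triv w1e by simp
    have b: "\<tau> (hd l1) = - f" using e Triv w1e by simp
    have "Triv x f \<in> MM" "NPath l1 \<in> MM" using w1 w2 Triv w1e by simp_all
    then show ?thesis using M_triv_hd a b by blast
  next
    case (NPath l2)
    have c1: "l1 \<noteq> []" "set l1 \<subseteq> arrs Q" "successively pp l1" using M_NPath w1 w1e by simp_all
    have c2: "l2 \<noteq> []" "set l2 \<subseteq> arrs Q" "successively pp l2" using M_NPath w2 NPath by simp_all
    have "hd l1 \<in> arrs Q" "hd l2 \<in> arrs Q" using c1 c2 hd_last_A by blast+
    moreover have "tgt Q (hd l1) = tgt Q (hd l2)" "\<tau> (hd l1) = \<tau> (hd l2)" using t e w1e NPath by simp_all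
    ultimately have hh: "hd l1 = hd l2" using tgt_inj by blast
    have n1: "\<not>(\<exists>y. pp (last l1) y)" using M_last w1 w1e by simp
    have n2: "\<not>(\<exists>y. pp (last l2) y)" using M_last w2 NPath by simp
    have "l1 = l2" by (rule chain_unique[OF pp_fn c1(3) c2(3) c1(1) c2(1) hh n1 n2])
    then show ?thesis using NPath w1e by simp
  qed
qed

lemma M_uniq_bot:
  assumes w1: "w1 \<in> MM" and w2: "w2 \<in> MM" and t: "gsrc Q w1 = gsrc Q w2" and e: "psig \<sigma> w1 = psig \<sigma> w2"
  shows "w1 = w2"
proof (cases w1)
  case (Triv x f)
  show ?thesis
  proof (cases w2)
    case (NPath l2)
    have a: "src Q (last l2) = x" using t Triv NPath by simp
    have b: "\<sigma> (last l2) = f" using e Triv NPath by simp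
    have "Triv x f \<in> MM" "NPath l2 \<in> MM" using w1 w2 Triv NPath by simp_all
    then show ?thesis using M_triv_last a b by blast
  qed (use t e Triv in simp)
next
  case (NPath l1)
  note w1e = this
  show ?thesis
  proof (cases w2)
    case (Triv x f)
    have a: "src Q (last l1) = x" using t Triv w1e by simp
    have b: "\<sigma> (last l1) = f" using e Triv w1e by simp
    have "Triv x f \<in> MM" "NPath l1 \<in> MM" using w1 w2 Triv w1e by simp_all
    then show ?thesis using M_triv_last a b by blast
  next
    case (NPath l2)
    have c1: "l1 \<noteq> []" "set l1 \<subseteq> arrs Q" "successively pp l1" using M_NPath w1 w1e by simp_all
    have c2: "l2 \<noteq> []" "set l2 \<subseteq> arrs Q" "successively pp l2" using M_NPath w2 NPath by simp_all
    have "last l1 \<in> arrs Q" "last l2 \<in> arrs Q" using c1 c2 hd_last_A by blast+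
    moreover have "src Q (last l1) = src Q (last l2)" "\<sigma> (last l1) = \<sigma> (last l2)" using t e w1e NPath by simp_all
    ultimately have hh: "hd (rev l1) = hd (rev l2)" using src_inj by (simp add: hd_rev)
    have n1: "\<not>(\<exists>y. (\<lambda>x y. pp y x) (last (rev l1)) y)" using M_hd w1 w1e by (simp add: last_rev)
    have n2: "\<not>(\<exists>y. (\<lambda>x y. pp y x) (last (rev l2)) y)" using M_hd w2 NPath by (simp add: last_rev)
    have s1: "successively (\<lambda>x y. pp y x) (rev l1)" using c1 by simp
    have s2: "successively (\<lambda>x y. pp y x) (rev l2)" using c2 by simp
    have "rev l1 = rev l2"
      by (rule chain_unique[OF ppr_fn s1 s2 _ _ hh n1 n2]) (use c1 c2 in simp_all)
    then show ?thesis using NPath w1e by simp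
  qed
qed

end


fun gnth :: "('v,'a) gpath \<Rightarrow> nat \<Rightarrow> 'a" where
  "gnth (NPath l) i = l ! i"
| "gnth (Triv x e) i = undefined"

context gq
begin

lemma N_basic: "w \<in> NN \<Longrightarrow> gsrc Q w \<in> verts Q \<and> gtgt Q w \<in> verts Q \<and> asig \<sigma> w \<in> {1,-1} \<and> atau \<tau> w \<in> {1,-1}"
proof (cases w)
  case (Triv x e)
  assume "w \<in> NN"
  then have "antipath Q w" unfolding N_mem by simp
  then show ?thesis using Triv by simp
next
  case (NPath l)
  assume "w \<in> NN"
  then have "l \<noteq> []" "set l \<subseteq> arrs Q" using N_NPath NPath by simp_all
  then have "hd l \<in> arrs Q" "last l \<in> arrs Q" using hd_last_A by blast+
  then show ?thesis using NPath srcV tgtV sig tau by simp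
qed

lemma M_basic: "w \<in> MM \<Longrightarrow> gsrc Q w \<in> verts Q \<and> gtgt Q w \<in> verts Q \<and> psig \<sigma> w \<in> {1,-1} \<and> ptau \<tau> w \<in> {1,-1}"
proof (cases w)
  case (Triv x e)
  assume "w \<in> MM"
  then have "permitted Q w" unfolding M_mem by simp
  then show ?thesis using Triv by auto
next
  case (NPath l)
  assume "w \<in> MM"
  then have "l \<noteq> []" "set l \<subseteq> arrs Q" using M_NPath NPath by simp_all
  then have "hd l \<in> arrs Q" "last l \<in> arrs Q" using hd_last_A by blast+
  then show ?thesis using NPath srcV tgtV sig tau by simp
qed

lemma ap_A: "ap x y \<Longrightarrow> y \<in> arrs Q"
  unfolding ap_def using relA by blast

lemma N_exists:
  assumes x: "x \<in> verts Q" and e: "\<epsilon> \<in> {1,-1}" and no: "\<not>(\<exists>a\<in>arrs Q. src Q a = x \<and> \<sigma> a = \<epsilon>)"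
  shows "\<exists>w\<in>NN. gtgt Q w = x \<and> atau \<tau> w = \<epsilon>"
proof (cases "\<exists>b\<in>arrs Q. tgt Q b = x \<and> \<tau> b = \<epsilon>")
  case False
  have "Triv x \<epsilon> \<in> NN" unfolding N_mem using x e no False by simp
  moreover have "gtgt Q (Triv x \<epsilon>) = x \<and> atau \<tau> (Triv x \<epsilon>) = \<epsilon>" by simp
  ultimately show ?thesis by blast
next
  case True
  then obtain b0 where b0: "b0 \<in> arrs Q" "tgt Q b0 = x" "\<tau> b0 = \<epsilon>" by blast
  have nopred: "\<not>(\<exists>z. ap z b0)"
  proof
    assume "\<exists>z. ap z b0"
    then obtain z where z: "(z, b0) \<in> rels Q" unfolding ap_def by blast
    have "z \<in> arrs Q" "src Q z = x" using relA[OF z] b0 by simp_all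
    moreover have "\<sigma> z = \<epsilon>" using R_sign[OF z] b0 by simp
    ultimately show False using no by blast
  qed
  have bound: "length l < card (arrs Q) + 1" if l: "successively ap l" "l \<noteq> []" "hd l = b0" for l
  proof -
    have di: "distinct l" using chain_distinct[OF ap_inj l(1)] nopred l(3) by simp
    have se: "set l \<subseteq> arrs Q" using chain_set[of ap "arrs Q", OF ap_A l(1,2)] l(3) b0(1) by simp
    have "length l = card (set l)" using di by (simp add: distinct_card)
    also have "\<dots> \<le> card (arrs Q)" by (rule card_mono[OF finA se])
    finally show ?thesis by simp
  qed
  have ex: "\<exists>l. successively ap l \<and> l \<noteq> [] \<and> hd l = b0 \<and> \<not>(\<exists>y. ap (last l) y)"
    by (rule chain_ext[of ap b0 "card (arrs Q) + 1" "[b0]", OF bound]) simp_all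
  then obtain l where l: "successively ap l" "l \<noteq> []" "hd l = b0" "\<not>(\<exists>y. ap (last l) y)"
    by blast
  have sl: "set l \<subseteq> arrs Q" using chain_set[of ap "arrs Q", OF ap_A l(1,2)] l(3) b0(1) by simp
  have lastA: "last l \<in> arrs Q" using sl l(2) by auto
  have bot: "\<not>(\<exists>b\<in>arrs Q. tgt Q b = src Q (last l) \<and> \<tau> b = \<sigma> (last l))"
  proof
    assume "\<exists>b\<in>arrs Q. tgt Q b = src Q (last l) \<and> \<tau> b = \<sigma> (last l)"
    then obtain b where bb: "b \<in> arrs Q" "tgt Q b = src Q (last l)" "\<tau> b = \<sigma> (last l)" by blast
    then have "(last l, b) \<in> rels Q" using R_iff[OF lastA bb(1)] by simp
    then show False using l(4) unfolding ap_def by blast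
  qed
  have "antipath Q (NPath l)" unfolding antipath_NPath using l sl by simp
  then have "NPath l \<in> NN" unfolding N_mem using no bot l(3) b0 by simp
  moreover have "gtgt Q (NPath l) = x \<and> atau \<tau> (NPath l) = \<epsilon>" using l(3) b0 by simp
  ultimately show ?thesis by blast
qed

lemma successively_take: "successively P l \<Longrightarrow> successively P (take n l)"
  by (auto simp: successively_conv_nth)

lemma perm_bound: "\<exists>n\<ge>1. \<forall>w. permitted Q (NPath w) \<longrightarrow> length w < n"
proof -
  have ex: "\<exists>n\<ge>1. \<forall>w. is_qpath Q w \<and> length w = n \<longrightarrow> (\<exists>i. Suc i < n \<and> (w!i, w!Suc i) \<in> rels Q)"
    using gen unfolding gentle_def by (elim conjE) assumption
  then obtain n where n: "n \<ge> 1" and H: "\<forall>w. is_qpath Q w \<and> length w = n \<longrightarrow> (\<exists>i. Suc i < n \<and> (w!i, w!Suc i) \<in> rels Q)"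
    by blast
  have "length w < n" if p: "permitted Q (NPath w)" for w
  proof (rule ccontr)
    assume "\<not> length w < n"
    then have len: "length (take n w) = n" by simp
    have w: "w \<noteq> []" "set w \<subseteq> arrs Q" "successively pp w" using p unfolding permitted_NPath by simp_all
    have "take n w \<noteq> []" using len n by auto
    moreover have "set (take n w) \<subseteq> arrs Q" using set_take_subset w(2) by (rule order_trans)
    moreover have "successively pp (take n w)" using w(3) by (rule successively_take)
    ultimately have "permitted Q (NPath (take n w))" unfolding permitted_NPath by simp
    then have q: "is_qpath Q (take n w)" and nr: "\<forall>i. Suc i < length (take n w) \<longrightarrow> (take n w ! i, take n w ! Suc i) \<notin> rels Q"
      by simp_all
    from H q len obtain i where "Suc i < n" "(take n w ! i, take n w ! Suc i) \<in> rels Q" by blast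
    then show False using nr len by simp
  qed
  then show ?thesis using n by blast
qed

lemma pp_A: "pp x y \<Longrightarrow> x \<in> arrs Q"
  unfolding pp_def by simp

lemma M_exists:
  assumes x: "x \<in> verts Q" and d: "\<delta> \<in> {1,-1}" and no: "\<not>(\<exists>b\<in>arrs Q. tgt Q b = x \<and> \<tau> b = - \<delta>)"
  shows "\<exists>w\<in>MM. gsrc Q w = x \<and> psig \<sigma> w = \<delta>"
proof (cases "\<exists>a\<in>arrs Q. src Q a = x \<and> \<sigma> a = \<delta>")
  case False
  have "Triv x \<delta> \<in> MM" unfolding M_mem using x d no False by simp
  moreover have "gsrc Q (Triv x \<delta>) = x \<and> psig \<sigma> (Triv x \<delta>) = \<delta>" by simp
  ultimately show ?thesis by blast
next
  case True
  then obtain a0 where a0: "a0 \<in> arrs Q" "src Q a0 = x" "\<sigma> a0 = \<delta>" by blast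
  obtain n where n: "\<forall>w. permitted Q (NPath w) \<longrightarrow> length w < n" using perm_bound by blast
  have setl: "set l \<subseteq> arrs Q" if l: "successively (\<lambda>u v. pp v u) l" "l \<noteq> []" "hd l = a0" for l
    using chain_set[of "\<lambda>u v. pp v u" "arrs Q", OF _ l(1,2)] pp_A l(3) a0(1) by simp
  have bound: "length l < n" if l: "successively (\<lambda>u v. pp v u) l" "l \<noteq> []" "hd l = a0" for l
  proof -
    have "successively pp (rev l)" using l(1) by simp
    then have "permitted Q (NPath (rev l))" unfolding permitted_NPath using setl[OF l] l(2) by simp
    then show ?thesis using n by fastforce
  qed
  have ex: "\<exists>l. successively (\<lambda>u v. pp v u) l \<and> l \<noteq> [] \<and> hd l = a0 \<and> \<not>(\<exists>y. (\<lambda>u v. pp v u) (last l) y)"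
    by (rule chain_ext[of "\<lambda>u v. pp v u" a0 n "[a0]", OF bound]) simp_all
  then obtain l where l: "successively (\<lambda>u v. pp v u) l" "l \<noteq> []" "hd l = a0" "\<not>(\<exists>y. pp y (last l))"
    by blast
  have sl: "set l \<subseteq> arrs Q" using setl l by simp
  have lastA: "last l \<in> arrs Q" using sl l(2) by auto
  have top: "\<not>(\<exists>a\<in>arrs Q. src Q a = tgt Q (last l) \<and> \<sigma> a = - \<tau> (last l))"
  proof
    assume "\<exists>a\<in>arrs Q. src Q a = tgt Q (last l) \<and> \<sigma> a = - \<tau> (last l)"
    then obtain a where aa: "a \<in> arrs Q" "src Q a = tgt Q (last l)" "\<sigma> a = - \<tau> (last l)" by blast
    have "\<tau> (last l) \<in> {1,-1}" using tau lastA by simp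
    then have "\<sigma> a \<noteq> \<tau> (last l)" using aa(3) by auto
    then have "(a, last l) \<notin> rels Q" using R_iff[OF aa(1) lastA aa(2)] by simp
    then have "pp a (last l)" unfolding pp_def using aa lastA by simp
    then show False using l(4) by blast
  qed
  have "permitted Q (NPath (rev l))" unfolding permitted_NPath using l sl by simp
  moreover have "gtgt Q (NPath (rev l)) = tgt Q (last l)" "ptau \<tau> (NPath (rev l)) = \<tau> (last l)"
    "gsrc Q (NPath (rev l)) = x" "psig \<sigma> (NPath (rev l)) = \<delta>"
    using l(2,3) a0 by (simp_all add: hd_rev last_rev)
  ultimately have "NPath (rev l) \<in> MM" unfolding M_mem using no top by simp
  moreover have "gsrc Q (NPath (rev l)) = x \<and> psig \<sigma> (NPath (rev l)) = \<delta>"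
    using l(2,3) a0 by (simp add: last_rev)
  ultimately show ?thesis by blast
qed

lemma psi_ok: assumes w: "w \<in> NN"
  shows "psi_map Q \<sigma> \<tau> w \<in> MM \<and> gsrc Q (psi_map Q \<sigma> \<tau> w) = gsrc Q w \<and> psig \<sigma> (psi_map Q \<sigma> \<tau> w) = - asig \<sigma> w"
proof -
  have b: "gsrc Q w \<in> verts Q" "asig \<sigma> w \<in> {1,-1}" using N_basic[OF w] by simp_all
  then have d: "- asig \<sigma> w \<in> {1,-1}" by auto
  have no: "\<not>(\<exists>b\<in>arrs Q. tgt Q b = gsrc Q w \<and> \<tau> b = - (- asig \<sigma> w))"
    using w unfolding N_mem by simp
  obtain w' where w': "w' \<in> MM" "gsrc Q w' = gsrc Q w" "psig \<sigma> w' = - asig \<sigma> w"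
    using M_exists[OF b(1) d no] by blast
  have "\<exists>!w'. w' \<in> MM \<and> gsrc Q w' = gsrc Q w \<and> psig \<sigma> w' = - asig \<sigma> w"
  proof (rule ex1I[of _ w'])
    show "w' \<in> MM \<and> gsrc Q w' = gsrc Q w \<and> psig \<sigma> w' = - asig \<sigma> w" using w' by simp
    fix v assume v: "v \<in> MM \<and> gsrc Q v = gsrc Q w \<and> psig \<sigma> v = - asig \<sigma> w"
    show "v = w'" by (rule M_uniq_bot) (use v w' in simp_all)
  qed
  then show ?thesis unfolding psi_map_def by (rule theI')
qed

lemma phi_ok: assumes w: "w \<in> MM"
  shows "phi_map Q \<sigma> \<tau> w \<in> NN \<and> gtgt Q (phi_map Q \<sigma> \<tau> w) = gtgt Q w \<and> atau \<tau> (phi_map Q \<sigma> \<tau> w) = - ptau \<tau> w"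
proof -
  have b: "gtgt Q w \<in> verts Q" "ptau \<tau> w \<in> {1,-1}" using M_basic[OF w] by simp_all
  then have d: "- ptau \<tau> w \<in> {1,-1}" by auto
  have no: "\<not>(\<exists>a\<in>arrs Q. src Q a = gtgt Q w \<and> \<sigma> a = - ptau \<tau> w)"
    using w unfolding M_mem by simp
  obtain w' where w': "w' \<in> NN" "gtgt Q w' = gtgt Q w" "atau \<tau> w' = - ptau \<tau> w"
    using N_exists[OF b(1) d no] by blast
  have "\<exists>!w'. w' \<in> NN \<and> gtgt Q w' = gtgt Q w \<and> atau \<tau> w' = - ptau \<tau> w"
  proof (rule ex1I[of _ w'])
    show "w' \<in> NN \<and> gtgt Q w' = gtgt Q w \<and> atau \<tau> w' = - ptau \<tau> w" using w' by simp
    fix v assume v: "v \<in> NN \<and> gtgt Q v = gtgt Q w \<and> atau \<tau> v = - ptau \<tau> w"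
    show "v = w'" by (rule N_uniq_top) (use v w' in simp_all)
  qed
  then show ?thesis unfolding phi_map_def by (rule theI')
qed

lemma Phi_N: "w \<in> NN \<Longrightarrow> Phi_map Q \<sigma> \<tau> w \<in> NN"
  unfolding Phi_map_def using psi_ok phi_ok by simp

lemma N_inj: "inj_on (\<lambda>w. (gtgt Q w, atau \<tau> w)) NN"
  by (rule inj_onI) (rule N_uniq_top, simp_all)

lemma fin_N: "finite NN"
proof (rule inj_on_finite[OF N_inj])
  show "(\<lambda>w. (gtgt Q w, atau \<tau> w)) ` NN \<subseteq> verts Q \<times> {1,-1}" using N_basic by auto
  show "finite (verts Q \<times> {1,-1::int})" using finV by simp
qed

lemma count_VNA: "2 * card (verts Q) = card NN + card (arrs Q)"
proof -
  let ?f1 = "\<lambda>w. (gtgt Q w, atau \<tau> w)"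
  let ?f2 = "\<lambda>a. (src Q a, \<sigma> a)"
  let ?P = "verts Q \<times> {1,-1::int}"
  have inj2: "inj_on ?f2 (arrs Q)" by (rule inj_onI) (use src_inj in auto)
  have sub1: "?f1 ` NN \<subseteq> ?P" using N_basic by auto
  have sub2: "?f2 ` arrs Q \<subseteq> ?P" using srcV sig by auto
  have sup: "?P \<subseteq> ?f1 ` NN \<union> ?f2 ` arrs Q"
  proof
    fix p assume p: "p \<in> ?P"
    then obtain x e where xe: "p = (x,e)" "x \<in> verts Q" "e \<in> {1,-1}" by auto
    show "p \<in> ?f1 ` NN \<union> ?f2 ` arrs Q"
    proof (cases "\<exists>a\<in>arrs Q. src Q a = x \<and> \<sigma> a = e")
      case True
      then obtain a where "a \<in> arrs Q" "src Q a = x" "\<sigma> a = e" by blast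
      then show ?thesis using xe by auto
    next
      case False
      obtain w where "w \<in> NN" "gtgt Q w = x" "atau \<tau> w = e" using N_exists[OF xe(2,3) False] by blast
      then show ?thesis using xe by auto
    qed
  qed
  have disj: "?f1 ` NN \<inter> ?f2 ` arrs Q = {}"
  proof (rule ccontr)
    assume "?f1 ` NN \<inter> ?f2 ` arrs Q \<noteq> {}"
    then obtain w a where wa: "w \<in> NN" "a \<in> arrs Q" "gtgt Q w = src Q a" "atau \<tau> w = \<sigma> a" by auto
    then show False unfolding N_mem by auto
  qed
  have eq: "?P = ?f1 ` NN \<union> ?f2 ` arrs Q" using sub1 sub2 sup by blast
  have "card ?P = card (?f1 ` NN) + card (?f2 ` arrs Q)"
    unfolding eq by (rule card_Un_disjoint) (use fin_N finA disj in simp_all)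
  also have "\<dots> = card NN + card (arrs Q)" using card_image[OF N_inj] card_image[OF inj2] by simp
  finally show ?thesis by (simp add: card_cartesian_product)
qed

abbreviation "CC \<equiv> Cset Q \<sigma> \<tau>"

lemma C_sub: "CC \<subseteq> arrs Q"
  unfolding Cset_def by auto

lemma fin_C: "finite CC"
  using finite_subset[OF C_sub finA] .

lemma arr_count: "card (arrs Q) = card CC + (\<Sum>w\<in>NN. glen w)"
proof -
  let ?S = "Sigma NN (\<lambda>w. {..<glen w})"
  let ?g = "\<lambda>(w,i). gnth w i"
  have cS: "card ?S = (\<Sum>w\<in>NN. glen w)" using fin_N by simp
  have inj: "inj_on ?g ?S"
  proof (rule inj_onI)
    fix p q assume p: "p \<in> ?S" and q: "q \<in> ?S" and e: "?g p = ?g q"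
    obtain w i where wi: "p = (w,i)" "w \<in> NN" "i < glen w" using p by auto
    obtain w' j where wj: "q = (w',j)" "w' \<in> NN" "j < glen w'" using q by auto
    obtain l where l: "w = NPath l" using wi(3) by (cases w) auto
    obtain l' where l': "w' = NPath l'" using wj(3) by (cases w') auto
    have c1: "l \<noteq> []" "set l \<subseteq> arrs Q" "successively ap l" using N_NPath wi(2) l by simp_all
    have c2: "l' \<noteq> []" "set l' \<subseteq> arrs Q" "successively ap l'" using N_NPath wj(2) l' by simp_all
    have h1: "\<not>(\<exists>z. ap z (hd l))" using N_hd wi(2) l by simp
    have h2: "\<not>(\<exists>z. ap z (hd l'))" using N_hd wj(2) l' by simp
    have ij: "i < length l" "j < length l'" using wi(3) wj(3) l l' by simp_all
    have "l ! i = l' ! j" using e wi(1) wj(1) l l' by simp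
    then have r: "i = j \<and> hd l = hd l'" using chain_hd_eq[OF ap_inj c1(3) c2(3) h1 h2 ij] by simp
    have n1: "\<not>(\<exists>y. ap (last l) y)" using N_last wi(2) l by simp
    have n2: "\<not>(\<exists>y. ap (last l') y)" using N_last wj(2) l' by simp
    have hh: "hd l = hd l'" using r by blast
    have "l = l'" by (rule chain_unique[OF ap_fn c1(3) c2(3) c1(1) c2(1) hh n1 n2])
    then show "p = q" using r wi(1) wj(1) l l' by simp
  qed
  have img: "?g ` ?S = arrs Q - CC"
  proof
    show "?g ` ?S \<subseteq> arrs Q - CC"
    proof
      fix a assume "a \<in> ?g ` ?S"
      then obtain w i where wi: "w \<in> NN" "i < glen w" "a = gnth w i" by auto
      obtain l where l: "w = NPath l" using wi(2) by (cases w) auto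
      have ai: "a \<in> set l" using wi l by simp
      moreover have "set l \<subseteq> arrs Q" using N_NPath wi(1) l by simp
      ultimately show "a \<in> arrs Q - CC" using wi(1) l unfolding Cset_def by blast
    qed
    show "arrs Q - CC \<subseteq> ?g ` ?S"
    proof
      fix a assume a: "a \<in> arrs Q - CC"
      then obtain l where l: "NPath l \<in> NN" "a \<in> set l" unfolding Cset_def by blast
      then obtain i where i: "i < length l" "a = l ! i" by (auto simp: in_set_conv_nth)
      then have "(NPath l, i) \<in> ?S" using l by simp
      moreover have "a = ?g (NPath l, i)" using i by simp
      ultimately show "a \<in> ?g ` ?S" by blast
    qed
  qed
  have "card (arrs Q - CC) = card ?S" using card_image[OF inj] img by simp
  moreover have "card (arrs Q - CC) = card (arrs Q) - card CC" by (rule card_Diff_subset[OF fin_C C_sub])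
  moreover have "card CC \<le> card (arrs Q)" by (rule card_mono[OF finA C_sub])
  ultimately show ?thesis using cS by simp
qed

lemma C_succ: assumes a: "a \<in> CC" shows "\<exists>b. (a,b) \<in> rels Q"
proof (rule ccontr)
  assume nos: "\<not>(\<exists>b. (a,b) \<in> rels Q)"
  have aA: "a \<in> arrs Q" using a C_sub by blast
  let ?nx = "\<lambda>u v. ap v u"
  have nxA: "?nx u v \<Longrightarrow> v \<in> arrs Q" for u v unfolding ap_def using relA by blast
  have nopred: "\<not>(\<exists>z. ?nx z a)" using nos unfolding ap_def by simp
  have bound: "length l < card (arrs Q) + 1" if l: "successively ?nx l" "l \<noteq> []" "hd l = a" for l
  proof -
    have di: "distinct l" using chain_distinct[OF apr_inj l(1)] nopred l(3) by simp
    have se: "set l \<subseteq> arrs Q" using chain_set[of ?nx "arrs Q", OF nxA l(1,2)] l(3) aA by simp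
    have "length l = card (set l)" using di by (simp add: distinct_card)
    also have "\<dots> \<le> card (arrs Q)" by (rule card_mono[OF finA se])
    finally show ?thesis by simp
  qed
  have ex: "\<exists>l. successively ?nx l \<and> l \<noteq> [] \<and> hd l = a \<and> \<not>(\<exists>y. ?nx (last l) y)"
    by (rule chain_ext[of ?nx a "card (arrs Q) + 1" "[a]", OF bound]) simp_all
  then obtain l where l: "successively ?nx l" "l \<noteq> []" "hd l = a" "\<not>(\<exists>y. ap y (last l))"
    by blast
  have sl: "set l \<subseteq> arrs Q" using chain_set[of ?nx "arrs Q", OF nxA l(1,2)] l(3) aA by simp
  have lastA: "last l \<in> arrs Q" using sl l(2) by auto
  have top: "\<not>(\<exists>a'\<in>arrs Q. src Q a' = tgt Q (last l) \<and> \<sigma> a' = \<tau> (last l))"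
  proof
    assume "\<exists>a'\<in>arrs Q. src Q a' = tgt Q (last l) \<and> \<sigma> a' = \<tau> (last l)"
    then obtain a' where aa: "a' \<in> arrs Q" "src Q a' = tgt Q (last l)" "\<sigma> a' = \<tau> (last l)" by blast
    then have "(a', last l) \<in> rels Q" using R_iff[OF aa(1) lastA aa(2)] by simp
    then show False using l(4) unfolding ap_def by blast
  qed
  have bot: "\<not>(\<exists>b\<in>arrs Q. tgt Q b = src Q a \<and> \<tau> b = \<sigma> a)"
  proof
    assume "\<exists>b\<in>arrs Q. tgt Q b = src Q a \<and> \<tau> b = \<sigma> a"
    then obtain b where bb: "b \<in> arrs Q" "tgt Q b = src Q a" "\<tau> b = \<sigma> a" by blast
    then have "(a, b) \<in> rels Q" using R_iff[OF aA bb(1)] by simp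
    then show False using nos by blast
  qed
  have sr: "successively ap (rev l)" using l(1) by simp
  have "antipath Q (NPath (rev l))" unfolding antipath_NPath using sr sl l(2) by simp
  moreover have "gtgt Q (NPath (rev l)) = tgt Q (last l)" "atau \<tau> (NPath (rev l)) = \<tau> (last l)"
    "gsrc Q (NPath (rev l)) = src Q a" "asig \<sigma> (NPath (rev l)) = \<sigma> a"
    using l(2,3) by (simp_all add: hd_rev last_rev)
  ultimately have "NPath (rev l) \<in> NN" unfolding N_mem using top bot by simp
  moreover have "a \<in> set (rev l)" using l(2,3) by auto
  ultimately show False using a unfolding Cset_def by blast
qed

lemma C_succ_C: assumes a: "a \<in> CC" and r: "(a,b) \<in> rels Q" shows "b \<in> CC"
proof -
  have bA: "b \<in> arrs Q" using relA[OF r] by simp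
  have "\<not>(\<exists>l. NPath l \<in> NN \<and> b \<in> set l)"
  proof
    assume "\<exists>l. NPath l \<in> NN \<and> b \<in> set l"
    then obtain l where l: "NPath l \<in> NN" "b \<in> set l" by blast
    then obtain i where i: "i < length l" "b = l ! i" by (auto simp: in_set_conv_nth)
    have c: "l \<noteq> []" "successively ap l" using N_NPath l(1) by simp_all
    show False
    proof (cases i)
      case 0
      then have "b = hd l" using i c(1) by (simp add: hd_conv_nth)
      then have "ap a (hd l)" using r unfolding ap_def by simp
      then show False using N_hd[OF l(1)] by blast
    next
      case (Suc k)
      have "ap (l!k) (l!Suc k)" using successively_nth[OF c(2)] i Suc by simp
      then have "(l!k, b) \<in> rels Q" using i Suc unfolding ap_def by simp
      then have "l!k = a" using R_pred_unique r by blast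
      moreover have "l!k \<in> set l" using i Suc by simp
      ultimately show False using a l(1) unfolding Cset_def by blast
    qed
  qed
  then show ?thesis using bA unfolding Cset_def by blast
qed

lemma Psi_ok: assumes a: "a \<in> CC"
  shows "Psi_map Q \<sigma> \<tau> a \<in> CC \<and> (a, Psi_map Q \<sigma> \<tau> a) \<in> rels Q"
proof -
  have aA: "a \<in> arrs Q" using a C_sub by blast
  obtain b where r: "(a,b) \<in> rels Q" using C_succ[OF a] by blast
  have bC: "b \<in> CC" using C_succ_C[OF a r] .
  have "\<exists>!b. b \<in> CC \<and> tgt Q b = src Q a \<and> \<tau> b = \<sigma> a"
  proof (rule ex1I[of _ b])
    show "b \<in> CC \<and> tgt Q b = src Q a \<and> \<tau> b = \<sigma> a" using bC relA[OF r] R_sign[OF r] by simp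
    fix c assume c: "c \<in> CC \<and> tgt Q c = src Q a \<and> \<tau> c = \<sigma> a"
    then have "c \<in> arrs Q" using C_sub by blast
    then have "(a,c) \<in> rels Q" using R_iff[OF aA] c by simp
    then show "c = b" using R_succ_unique r by blast
  qed
  then have P: "Psi_map Q \<sigma> \<tau> a \<in> CC \<and> tgt Q (Psi_map Q \<sigma> \<tau> a) = src Q a \<and> \<tau> (Psi_map Q \<sigma> \<tau> a) = \<sigma> a"
    unfolding Psi_map_def by (rule theI')
  then have "Psi_map Q \<sigma> \<tau> a \<in> arrs Q" using C_sub by blast
  then have "(a, Psi_map Q \<sigma> \<tau> a) \<in> rels Q" using R_iff[OF aA] P by simp
  then show ?thesis using P by simp
qed

lemma Psi_inj: "inj_on (Psi_map Q \<sigma> \<tau>) CC"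
proof (rule inj_onI)
  fix a a' assume a: "a \<in> CC" and a': "a' \<in> CC" and e: "Psi_map Q \<sigma> \<tau> a = Psi_map Q \<sigma> \<tau> a'"
  have "(a', Psi_map Q \<sigma> \<tau> a') \<in> rels Q" using Psi_ok[OF a'] by simp
  then have "(a', Psi_map Q \<sigma> \<tau> a) \<in> rels Q" using e by simp
  moreover have "(a, Psi_map Q \<sigma> \<tau> a) \<in> rels Q" using Psi_ok[OF a] by simp
  ultimately show "a = a'" using R_pred_unique by blast
qed

lemma Psi_C: "Psi_map Q \<sigma> \<tau> ` CC \<subseteq> CC"
  using Psi_ok by blast

abbreviation "PhO \<equiv> Phi_orbits Q \<sigma> \<tau>"
abbreviation "PO \<equiv> Psi_orbits Q \<sigma> \<tau>"

end


lemma orb3: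
  assumes fin: "finite S" and inj: "inj_on g S" and gS: "g ` S \<subseteq> S" and a: "a \<in> S"
    and c3: "card (orb g a) = 3"
  shows "g a \<noteq> a \<and> g (g a) \<noteq> a \<and> g (g (g a)) = a"
proof -
  have ga: "g a \<in> S" using gS a by blast
  have gga: "g (g a) \<in> S" using gS ga by blast
  have finO: "finite (orb g a)" using finite_subset[OF orb_sub[OF gS a] fin] .
  have m0: "a \<in> orb g a" by (rule orb_self)
  have m1: "g a \<in> orb g a" unfolding orb_def by (rule CollectI, rule exI[of _ 1]) simp
  have m2: "g (g a) \<in> orb g a" unfolding orb_def by (rule CollectI, rule exI[of _ 2]) (simp add: numeral_2_eq_2)
  have m3: "g (g (g a)) \<in> orb g a" unfolding orb_def by (rule CollectI, rule exI[of _ 3]) (simp add: numeral_3_eq_3)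
  have n1: "g a \<noteq> a"
  proof
    assume h: "g a = a"
    have "(g^^n) a = a" for n by (induction n) (use h in simp_all)
    then have "orb g a \<subseteq> {a}" unfolding orb_def by auto
    then have "card (orb g a) \<le> 1" using card_mono[of "{a}"] by fastforce
    then show False using c3 by simp
  qed
  have n2: "g (g a) \<noteq> a"
  proof
    assume h: "g (g a) = a"
    have "(g^^n) a \<in> {a, g a}" for n by (induction n) (use h in auto)
    then have "orb g a \<subseteq> {a, g a}" unfolding orb_def by auto
    then have "card (orb g a) \<le> card {a, g a}" by (intro card_mono) simp_all
    also have "\<dots> \<le> 2" by (simp add: card_insert_if)
    finally show False using c3 by simp
  qed
  have n3: "g (g a) \<noteq> g a"
  proof
    assume "g (g a) = g a"
    then have "g a = a" using inj ga a by (auto simp: inj_on_def)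
    then show False using n1 by simp
  qed
  have "{a, g a, g (g a)} \<subseteq> orb g a" using m0 m1 m2 by simp
  moreover have "card {a, g a, g (g a)} = 3" using n1 n2 n3 by (simp add: card_insert_if)
  ultimately have O: "orb g a = {a, g a, g (g a)}" using card_subset_eq[OF finO] c3 by metis
  then have "g (g (g a)) \<in> {a, g a, g (g a)}" using m3 by simp
  moreover have "g (g (g a)) \<noteq> g a"
  proof
    assume "g (g (g a)) = g a"
    then have "g (g a) = a" using inj gga a by (auto simp: inj_on_def)
    then show False using n2 by simp
  qed
  moreover have "g (g (g a)) \<noteq> g (g a)"
  proof
    assume "g (g (g a)) = g (g a)"
    then have "g (g a) = g a" using inj gga ga by (auto simp: inj_on_def)
    then show False using n3 by simp
  qed
  ultimately show ?thesis using n1 n2 by auto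
qed

lemma qdel_simps [simp]:
  "verts (qdel Q D) = verts Q" "arrs (qdel Q D) = arrs Q - D" "src (qdel Q D) = src Q"
  "tgt (qdel Q D) = tgt Q" "rels (qdel Q D) = {r \<in> rels Q. fst r \<notin> D \<and> snd r \<notin> D}"
  by (simp_all add: qdel_def)

lemma qconn_del:
  assumes c: "qconnected Q"
    and H: "\<And>a. a \<in> arrs Q \<Longrightarrow> a \<in> D \<Longrightarrow> \<exists>b c. b \<in> arrs Q - D \<and> c \<in> arrs Q - D \<and>
              tgt Q b = src Q a \<and> tgt Q c = src Q b \<and> src Q c = tgt Q a"
  shows "qconnected (qdel Q D)"
proof -
  let ?E = "{(src Q a, tgt Q a) | a. a \<in> arrs Q} \<union> {(tgt Q a, src Q a) | a. a \<in> arrs Q}"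
  let ?E' = "{(src Q a, tgt Q a) | a. a \<in> arrs Q - D} \<union> {(tgt Q a, src Q a) | a. a \<in> arrs Q - D}"
  have sub: "?E \<subseteq> ?E'\<^sup>*"
  proof
    fix p assume "p \<in> ?E"
    then obtain a where a: "a \<in> arrs Q" and p: "p = (src Q a, tgt Q a) \<or> p = (tgt Q a, src Q a)" by blast
    show "p \<in> ?E'\<^sup>*"
    proof (cases "a \<in> D")
      case False
      then have "p \<in> ?E'" using a p by blast
      then show ?thesis by (rule r_into_rtrancl)
    next
      case True
      obtain b c where bc: "b \<in> arrs Q - D" "c \<in> arrs Q - D" "tgt Q b = src Q a" "tgt Q c = src Q b"
        "src Q c = tgt Q a" using H[OF a True] by blast
      have e1: "(src Q a, src Q b) \<in> ?E'" using bc(1,3) by force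
      have e2: "(src Q b, tgt Q a) \<in> ?E'" using bc(2,4,5) by force
      have e3: "(tgt Q a, src Q b) \<in> ?E'" using bc(2,4,5) by force
      have e4: "(src Q b, src Q a) \<in> ?E'" using bc(1,3) by force
      have f1: "(src Q a, tgt Q a) \<in> ?E'\<^sup>*" using e1 e2 by (meson r_into_rtrancl rtrancl_into_rtrancl)
      have f2: "(tgt Q a, src Q a) \<in> ?E'\<^sup>*" using e3 e4 by (meson r_into_rtrancl rtrancl_into_rtrancl)
      show ?thesis using p f1 f2 by blast
    qed
  qed
  then have sub2: "?E\<^sup>* \<subseteq> ?E'\<^sup>*" by (rule rtrancl_subset_rtrancl)
  have "verts Q \<noteq> {}" and cc: "\<forall>x\<in>verts Q. \<forall>y\<in>verts Q. (x,y) \<in> ?E\<^sup>*" using c unfolding qconnected_def by simp_all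
  then show ?thesis unfolding qconnected_def qdel_simps using sub2 by blast
qed

lemma gentle_del:
  assumes g: "gentle Q" and c: "qconnected (qdel Q D)"
  shows "gentle (qdel Q D)"
proof -
  have g1: "finite (verts Q)" using g unfolding gentle_def by (elim conjE) assumption
  have g2: "finite (arrs Q)" using g unfolding gentle_def by (elim conjE) assumption
  have g3: "\<forall>a\<in>arrs Q. src Q a \<in> verts Q \<and> tgt Q a \<in> verts Q" using g unfolding gentle_def by (elim conjE) assumption
  have g4: "\<forall>(a,b)\<in>rels Q. a \<in> arrs Q \<and> b \<in> arrs Q \<and> src Q a = tgt Q b" using g unfolding gentle_def by (elim conjE) assumption
  have g6: "\<forall>x\<in>verts Q. card {a\<in>arrs Q. src Q a = x} \<le> 2 \<and> card {a\<in>arrs Q. tgt Q a = x} \<le> 2"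
    using g unfolding gentle_def by (elim conjE) assumption
  have g7: "\<forall>a\<in>arrs Q. card {b\<in>arrs Q. src Q b = tgt Q a \<and> (b,a) \<notin> rels Q} \<le> 1 \<and>
                 card {c\<in>arrs Q. tgt Q c = src Q a \<and> (a,c) \<notin> rels Q} \<le> 1"
    using g unfolding gentle_def by (elim conjE) assumption
  have g8: "\<forall>a\<in>arrs Q. card {b. (b,a) \<in> rels Q} \<le> 1 \<and> card {c. (a,c) \<in> rels Q} \<le> 1"
    using g unfolding gentle_def by (elim conjE) assumption
  have g9: "\<exists>n\<ge>1. \<forall>w. is_qpath Q w \<and> length w = n \<longrightarrow> (\<exists>i. Suc i < n \<and> (w!i, w!Suc i) \<in> rels Q)"
    using g unfolding gentle_def by (elim conjE) assumption
  let ?Q = "qdel Q D"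
  have h1: "finite (verts ?Q)" using g1 by simp
  have h2: "finite (arrs ?Q)" using g2 by simp
  have h3: "\<forall>a\<in>arrs ?Q. src ?Q a \<in> verts ?Q \<and> tgt ?Q a \<in> verts ?Q" using g3 by simp
  have h4: "\<forall>(a,b)\<in>rels ?Q. a \<in> arrs ?Q \<and> b \<in> arrs ?Q \<and> src ?Q a = tgt ?Q b" using g4 by auto
  have h6: "\<forall>x\<in>verts ?Q. card {a\<in>arrs ?Q. src ?Q a = x} \<le> 2 \<and> card {a\<in>arrs ?Q. tgt ?Q a = x} \<le> 2"
  proof
    fix x assume x: "x \<in> verts ?Q"
    have "card {a\<in>arrs ?Q. src ?Q a = x} \<le> card {a\<in>arrs Q. src Q a = x}"
      by (rule card_mono) (use g2 in auto)
    moreover have "card {a\<in>arrs ?Q. tgt ?Q a = x} \<le> card {a\<in>arrs Q. tgt Q a = x}"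
      by (rule card_mono) (use g2 in auto)
    ultimately show "card {a\<in>arrs ?Q. src ?Q a = x} \<le> 2 \<and> card {a\<in>arrs ?Q. tgt ?Q a = x} \<le> 2"
      using g6 x by force
  qed
  have h7: "\<forall>a\<in>arrs ?Q. card {b\<in>arrs ?Q. src ?Q b = tgt ?Q a \<and> (b,a) \<notin> rels ?Q} \<le> 1 \<and>
                 card {c\<in>arrs ?Q. tgt ?Q c = src ?Q a \<and> (a,c) \<notin> rels ?Q} \<le> 1"
  proof
    fix a assume a: "a \<in> arrs ?Q"
    have "card {b\<in>arrs ?Q. src ?Q b = tgt ?Q a \<and> (b,a) \<notin> rels ?Q} \<le> card {b\<in>arrs Q. src Q b = tgt Q a \<and> (b,a) \<notin> rels Q}"
      by (rule card_mono) (use g2 a in auto)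
    moreover have "card {c\<in>arrs ?Q. tgt ?Q c = src ?Q a \<and> (a,c) \<notin> rels ?Q} \<le> card {c\<in>arrs Q. tgt Q c = src Q a \<and> (a,c) \<notin> rels Q}"
      by (rule card_mono) (use g2 a in auto)
    ultimately show "card {b\<in>arrs ?Q. src ?Q b = tgt ?Q a \<and> (b,a) \<notin> rels ?Q} \<le> 1 \<and>
                 card {c\<in>arrs ?Q. tgt ?Q c = src ?Q a \<and> (a,c) \<notin> rels ?Q} \<le> 1"
      using g7 a by force
  qed
  have h8: "\<forall>a\<in>arrs ?Q. card {b. (b,a) \<in> rels ?Q} \<le> 1 \<and> card {c. (a,c) \<in> rels ?Q} \<le> 1"
  proof
    fix a assume a: "a \<in> arrs ?Q"
    have f1: "finite {b. (b,a) \<in> rels Q}" by (rule finite_subset[OF _ g2]) (use g4 in auto)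
    have f2: "finite {c. (a,c) \<in> rels Q}" by (rule finite_subset[OF _ g2]) (use g4 in auto)
    have "card {b. (b,a) \<in> rels ?Q} \<le> card {b. (b,a) \<in> rels Q}"
      by (rule card_mono[OF f1]) auto
    moreover have "card {c. (a,c) \<in> rels ?Q} \<le> card {c. (a,c) \<in> rels Q}"
      by (rule card_mono[OF f2]) auto
    ultimately show "card {b. (b,a) \<in> rels ?Q} \<le> 1 \<and> card {c. (a,c) \<in> rels ?Q} \<le> 1"
      using g8 a by force
  qed
  have h9: "\<exists>n\<ge>1. \<forall>w. is_qpath ?Q w \<and> length w = n \<longrightarrow> (\<exists>i. Suc i < n \<and> (w!i, w!Suc i) \<in> rels ?Q)"
  proof -
    obtain n where n: "n \<ge> 1" and H: "\<forall>w. is_qpath Q w \<and> length w = n \<longrightarrow> (\<exists>i. Suc i < n \<and> (w!i, w!Suc i) \<in> rels Q)"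
      using g9 by blast
    have "\<exists>i. Suc i < n \<and> (w!i, w!Suc i) \<in> rels ?Q" if w: "is_qpath ?Q w" "length w = n" for w
    proof -
      have sw: "set w \<subseteq> arrs Q - D" using w(1) unfolding is_qpath_def by simp
      have "is_qpath Q w" using w(1) unfolding is_qpath_def by auto
      then obtain i where i: "Suc i < n" "(w!i, w!Suc i) \<in> rels Q" using H w(2) by blast
      have "w!i \<in> set w" "w!Suc i \<in> set w" using i(1) w(2) by simp_all
      then have "w!i \<notin> D" "w!Suc i \<notin> D" using sw by auto
      then show ?thesis using i by auto
    qed
    then show ?thesis using n by blast
  qed
  show ?thesis unfolding gentle_def
    by (intro conjI, fact h1, fact h2, fact h3, fact h4, fact c, fact h6, fact h7, fact h8, fact h9)
qed


theorem lemma6p2: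
  fixes Q :: "('v,'a) quiver" and \<sigma> \<tau> :: "'a \<Rightarrow> int" and m p :: nat
    and ch :: "'a set \<Rightarrow> 'a"
  assumes "gentle Q"
    and "admissible_signs Q \<sigma> \<tau>"
    and "\<forall>a b. finv Q \<sigma> \<tau> a b =
            m * (if (a,b) = (0,3) then 1 else 0) + (if (a,b) = (p+m+2, p) then 1 else 0)"
    and "\<forall>T\<in>triangles Q \<sigma> \<tau>. ch T \<in> T"
  shows "gentle (qdel Q (ch ` triangles Q \<sigma> \<tau>)) \<and>
         card (verts (qdel Q (ch ` triangles Q \<sigma> \<tau>)))
           = card (arrs (qdel Q (ch ` triangles Q \<sigma> \<tau>))) + 1"
proof -
  interpret gq Q \<sigma> \<tau> by (rule gq.intro) (fact assms(1), fact assms(2))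
  note F = assms(3)
  let ?Psi = "Psi_map Q \<sigma> \<tau>"
  let ?Phi = "Phi_map Q \<sigma> \<tau>"
  have PO_eq: "PO = orb ?Psi ` CC" unfolding Psi_orbits_def ..
  have PhO_eq: "PhO = orb ?Phi ` NN" unfolding Phi_orbits_def ..
  have Phi_NN: "?Phi ` NN \<subseteq> NN" using Phi_N by blast
  have finPO: "finite PO" using PO_eq fin_C by simp
  have finPhO: "finite PhO" using PhO_eq fin_N by simp
  have POel: "finite X \<and> X \<subseteq> CC \<and> card X \<ge> 1" if XP: "X \<in> PO" for X
  proof -
    obtain x where x: "x \<in> CC" "X = orb ?Psi x" using XP PO_eq by auto
    have sub: "X \<subseteq> CC" using orb_sub[OF Psi_C x(1)] x(2) by simp
    have fX: "finite X" using finite_subset[OF sub fin_C] .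
    have "x \<in> X" using x(2) orb_self by simp
    then have "card X \<ge> 1" using fX by (metis One_nat_def Suc_leI card_gt_0_iff empty_iff)
    then show ?thesis using fX sub by simp
  qed
  have PhOel: "finite X \<and> X \<subseteq> NN \<and> card X \<ge> 1" if XP: "X \<in> PhO" for X
  proof -
    obtain x where x: "x \<in> NN" "X = orb ?Phi x" using XP PhO_eq by auto
    have sub: "X \<subseteq> NN" using orb_sub[OF Phi_NN x(1)] x(2) by simp
    have fX: "finite X" using finite_subset[OF sub fin_N] .
    have "x \<in> X" using x(2) orb_self by simp
    then have "card X \<ge> 1" using fX by (metis One_nat_def Suc_leI card_gt_0_iff empty_iff)
    then show ?thesis using fX sub by simp
  qed
  have finv0: "finv Q \<sigma> \<tau> 0 k = card {X \<in> PO. card X = k}" for k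
  proof -
    have e: "{X \<in> PhO. card X = 0 \<and> (\<Sum>w\<in>X. glen w) = k} = {}" using PhOel by fastforce
    show ?thesis unfolding finv_def e by simp
  qed
  have k3: "card X = 3" if X: "X \<in> PO" for X
  proof (rule ccontr)
    assume ne: "card X \<noteq> 3"
    have "X \<in> {Y \<in> PO. card Y = card X}" using X by simp
    moreover have "finite {Y \<in> PO. card Y = card X}" using finPO by simp
    ultimately have "card {Y \<in> PO. card Y = card X} \<noteq> 0" by (metis card_0_eq empty_iff)
    moreover have "finv Q \<sigma> \<tau> 0 (card X) = 0" using F ne by simp
    ultimately show False using finv0 by simp
  qed
  have T_eq: "triangles Q \<sigma> \<tau> = PO" unfolding triangles_def using k3 by blast
  have cPO: "card PO = m"
  proof -
    have "finv Q \<sigma> \<tau> 0 3 = m" using F by simp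
    moreover have "{X \<in> PO. card X = 3} = PO" using k3 by blast
    ultimately show ?thesis using finv0[of 3] by simp
  qed
  have disjPO: "X \<inter> Y = {}" if "X \<in> PO" "Y \<in> PO" "X \<noteq> Y" for X Y
    using orbs_disjoint[OF fin_C Psi_inj Psi_C] that PO_eq by simp
  have cC: "card CC = 3 * m"
  proof -
    have U: "\<Union> PO = CC" using orbs_union[OF Psi_C] PO_eq by simp
    have pd: "pairwise disjnt PO" using disjPO unfolding pairwise_def disjnt_def by blast
    have "card (\<Union> PO) = sum card PO" by (rule card_Union_disjoint[OF pd]) (use POel in blast)
    also have "\<dots> = sum (\<lambda>_. 3) PO" using k3 by simp
    also have "\<dots> = 3 * m" using cPO by simp
    finally show ?thesis using U by simp
  qed
  let ?S0 = "{X \<in> PhO. card X = p+m+2 \<and> (\<Sum>w\<in>X. glen w) = p}"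
  have "finv Q \<sigma> \<tau> (p+m+2) p = card ?S0" unfolding finv_def by simp
  moreover have "finv Q \<sigma> \<tau> (p+m+2) p = 1" using F by simp
  ultimately have "card ?S0 = 1" by simp
  then obtain X0 where S0: "?S0 = {X0}" using card_1_singletonE by blast
  have allX0: "orb ?Phi w = X0" if w: "w \<in> NN" for w
  proof (rule ccontr)
    assume ne: "orb ?Phi w \<noteq> X0"
    let ?X = "orb ?Phi w"
    have X: "?X \<in> PhO" using PhO_eq w by simp
    have nS: "?X \<notin> ?S0" using S0 ne by blast
    let ?k = "card ?X" and ?s = "\<Sum>u\<in>?X. glen u"
    have k1: "?k \<ge> 1" using PhOel[OF X] by simp
    have "\<not> (?k = p+m+2 \<and> ?s = p)" using nS X by blast
    then have e2: "((?k, ?s) = (p+m+2, p)) = False" by simp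
    have e1: "((?k, ?s) = (0, 3)) = False" using k1 by simp
    have f0: "finv Q \<sigma> \<tau> ?k ?s = 0" using F[rule_format, of ?k ?s] unfolding e1 e2 by simp
    have "?X \<in> {Y \<in> PhO. card Y = ?k \<and> (\<Sum>u\<in>Y. glen u) = ?s}" using X by simp
    moreover have "finite {Y \<in> PhO. card Y = ?k \<and> (\<Sum>u\<in>Y. glen u) = ?s}" using finPhO by simp
    ultimately have c0: "card {Y \<in> PhO. card Y = ?k \<and> (\<Sum>u\<in>Y. glen u) = ?s} > 0"
      using card_gt_0_iff by blast
    have "finv Q \<sigma> \<tau> ?k ?s \<ge> card {Y \<in> PhO. card Y = ?k \<and> (\<Sum>u\<in>Y. glen u) = ?s}"
      unfolding finv_def by (rule le_add1)
    then show False using f0 c0 by simp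
  qed
  have "X0 \<in> ?S0" using S0 by simp
  then have X0: "X0 \<in> PhO" "card X0 = p+m+2" "(\<Sum>w\<in>X0. glen w) = p" by simp_all
  have NN_eq: "NN = X0"
  proof
    show "NN \<subseteq> X0"
    proof
      fix w assume w: "w \<in> NN"
      have "w \<in> orb ?Phi w" by (rule orb_self)
      then show "w \<in> X0" using allX0[OF w] by simp
    qed
    show "X0 \<subseteq> NN" using PhOel[OF X0(1)] by simp
  qed
  have cN: "card NN = p+m+2" and sN: "(\<Sum>w\<in>NN. glen w) = p" using NN_eq X0 by simp_all
  have cA: "card (arrs Q) = 3*m + p" using arr_count cC sN by simp
  have cV: "card (verts Q) = 2*m + p + 1" using count_VNA cN cA by simp
  let ?D = "ch ` triangles Q \<sigma> \<tau>"
  have chX: "ch X \<in> X" if XP: "X \<in> PO" for X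
  proof -
    have "X \<in> triangles Q \<sigma> \<tau>" using T_eq XP by simp
    then show ?thesis using assms(4) by blast
  qed
  have injch: "inj_on ch PO"
  proof (rule inj_onI)
    fix X Y assume XY: "X \<in> PO" "Y \<in> PO" "ch X = ch Y"
    show "X = Y"
    proof (rule ccontr)
      assume "X \<noteq> Y"
      then have "X \<inter> Y = {}" using disjPO XY by simp
      then show False using chX XY by (metis disjoint_iff)
    qed
  qed
  have DA: "?D \<subseteq> arrs Q" using chX POel C_sub T_eq by blast
  have cD: "card ?D = m" using card_image[OF injch] cPO T_eq by simp
  have cA': "card (arrs Q - ?D) = 2*m + p"
    using card_Diff_subset[OF finite_subset[OF DA finA] DA] cD cA by simp
  have notD: "z \<notin> ?D" if z: "z \<in> X" "X \<in> PO" "z \<noteq> ch X" for z X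
  proof
    assume "z \<in> ?D"
    then obtain Y where Y: "Y \<in> PO" "z = ch Y" using T_eq by blast
    have "z \<in> Y" using chX Y by simp
    then have "X = Y" using disjPO z(1,2) Y(1) by blast
    then show False using z Y by simp
  qed
  have H: "\<exists>b c. b \<in> arrs Q - ?D \<and> c \<in> arrs Q - ?D \<and>
              tgt Q b = src Q a \<and> tgt Q c = src Q b \<and> src Q c = tgt Q a"
    if a: "a \<in> arrs Q" "a \<in> ?D" for a
  proof -
    obtain X where X: "X \<in> PO" "a = ch X" using a(2) T_eq by blast
    have aX: "a \<in> X" using chX X by simp
    have aC: "a \<in> CC" using POel[OF X(1)] aX by blast
    obtain x where x: "x \<in> CC" "X = orb ?Psi x" using X(1) PO_eq by auto
    have Xa: "orb ?Psi a = X" using orb_eq[OF fin_C Psi_inj Psi_C x(1)] aX x(2) by simp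
    have c3: "card (orb ?Psi a) = 3" using k3 X(1) Xa by simp
    have o3: "?Psi a \<noteq> a \<and> ?Psi (?Psi a) \<noteq> a \<and> ?Psi (?Psi (?Psi a)) = a"
      by (rule orb3[OF fin_C Psi_inj Psi_C aC c3])
    let ?b = "?Psi a" and ?c = "?Psi (?Psi a)"
    have bC: "?b \<in> CC" and r1: "(a, ?b) \<in> rels Q" using Psi_ok[OF aC] by simp_all
    have cC': "?c \<in> CC" and r2: "(?b, ?c) \<in> rels Q" using Psi_ok[OF bC] by simp_all
    have r3: "(?c, a) \<in> rels Q" using Psi_ok[OF cC'] o3 by simp
    have bX: "?b \<in> X" using Xa unfolding orb_def by (auto intro: exI[of _ 1])
    have cX: "?c \<in> X" using Xa unfolding orb_def by (auto intro: exI[of _ 2] simp: numeral_2_eq_2)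
    have "?b \<notin> ?D" using notD[OF bX X(1)] o3 X(2) by simp
    moreover have "?c \<notin> ?D" using notD[OF cX X(1)] o3 X(2) by simp
    moreover have "?b \<in> arrs Q" "?c \<in> arrs Q" using bC cC' C_sub by blast+
    moreover have "tgt Q ?b = src Q a" "tgt Q ?c = src Q ?b" "src Q ?c = tgt Q a"
      using relA[OF r1] relA[OF r2] relA[OF r3] by simp_all
    ultimately show ?thesis by blast
  qed
  have qc: "qconnected Q" using assms(1) unfolding gentle_def by (elim conjE) assumption
  have "qconnected (qdel Q ?D)" by (rule qconn_del[OF qc H]) simp_all
  then have "gentle (qdel Q ?D)" by (rule gentle_del[OF assms(1)])
  moreover have "card (verts (qdel Q ?D)) = card (arrs (qdel Q ?D)) + 1" using cV cA' by simp
  ultimately show ?thesis by simp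
qed

end
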